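(* Let $H_n$ be the normal closure in $VB_n$ of the subgroup generated by $\sigma_1,\dots,\sigma_{n-1}$. Then $H_n$ is generated by the elements $x_{k,l}$, $1\le k\neq l\le n$, and admits the presentation with these generators and defining relations $$x_{i,j}x_{k,l}=x_{k,l}x_{i,j}\quad(i,j,k,l\text{ pairwise distinct}),$$ $$x_{i,k}x_{k,j}x_{i,k}=x_{k,j}x_{i,k}x_{k,j}\quad(i,j,k\text{ pairwise distinct}).$$
   Context: The virtual braid group $VB_n$ is the group with generators $\sigma_i,\rho_i$ ($i=1,\dots,n-1$) and defining relations: $\sigma_i\sigma_{i+1}\sigma_i=\sigma_{i+1}\sigma_i\sigma_{i+1}$ ($1\le i\le n-2$); $\sigma_i\sigma_j=\sigma_j\sigma_i$ ($|i-j|\geq 2$); $\rho_i\rho_{i+1}\rho_i=\rho_{i+1}\rho_i\rho_{i+1}$ ($1\le i\le n-2$); $\rho_i\rho_j=\rho_j\rho_i$ ($|i-j|\geq 2$); $\rho_i^2=1$; $\sigma_i\rho_j=\rho_j\sigma_i$ ($|i-j|\geq2$); $\rho_i\rho_{i+1}\sigma_i=\sigma_{i+1}\rho_i\rho_{i+1}$ ($1\le i\le n-2$). $H_n$ equals the kernel of the homomorphism $\mu:VB_n\to S_n$, $\mu(\sigma_i)=1$, $\mu(\rho_i)=(i\ i{+}1)$. Elements of $VB_n$: $x_{i,i+1}=\sigma_i$; $x_{i,j}=\rho_{j-1}\cdots\rho_{i+1}\sigma_i\rho_{i+1}\cdots\rho_{j-1}$ for $1\le i<j-1\le n-1$; $x_{i+1,i}=\rho_i\sigma_i\rho_i$;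 $x_{j,i}=\rho_{j-1}\cdots\rho_{i+1}\rho_i\sigma_i\rho_i\rho_{i+1}\cdots\rho_{j-1}$ for $1\le i<j-1\le n-1$. *)

theory Defs
  imports "HOL-Algebra.Algebra"
begin

text \<open>A letter is a generator together with a flag; (g, False) stands for g and
  (g, True) for its inverse.  Words are lists of letters.\<close>

type_synonym 'g word = "('g \<times> bool) list"

definition inv_word :: "'g word \<Rightarrow> 'g word" where
  "inv_word w = rev (map (\<lambda>(g, b). (g, \<not> b)) w)"

inductive pres_eq :: "'g set \<Rightarrow> ('g word \<times> 'g word) set \<Rightarrow> 'g word \<Rightarrow> 'g word \<Rightarrow> bool"
  for S R where
  refl: "pres_eq S R w w"
| sym: "pres_eq S R u v \<Longrightarrow> pres_eq S R v u"
| trans: "pres_eq S R u v \<Longrightarrow> pres_eq S R v w \<Longrightarrow> pres_eq S R u w"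
| cancel: "g \<in> S \<Longrightarrow> pres_eq S R [(g, b), (g, \<not> b)] []"
| rel: "(l, r) \<in> R \<Longrightarrow> pres_eq S R l r"
| congr: "pres_eq S R u u' \<Longrightarrow> pres_eq S R v v' \<Longrightarrow> pres_eq S R (u @ v) (u' @ v')"

definition words :: "'g set \<Rightarrow> 'g word set" where
  "words S = {w. set (map fst w) \<subseteq> S}"

definition pres_rel :: "'g set \<Rightarrow> ('g word \<times> 'g word) set \<Rightarrow> ('g word \<times> 'g word) set" where
  "pres_rel S R = {(u, v). u \<in> words S \<and> v \<in> words S \<and> pres_eq S R u v}"

text \<open>The group with generators S and defining relations R (all relators are assumed to be
  words over S).  Elements are equivalence classes of words.\<close>

definition presented_group :: "'g set \<Rightarrow> ('g word \<times> 'g word) set \<Rightarrow> 'g word set monoid" where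
  "presented_group S R =
     \<lparr> carrier = words S // pres_rel S R,
       monoid.mult = (\<lambda>A B. pres_rel S R `` {(SOME u. u \<in> A) @ (SOME v. v \<in> B)}),
       one = pres_rel S R `` {[]} \<rparr>"

definition gen_elem :: "'g set \<Rightarrow> ('g word \<times> 'g word) set \<Rightarrow> 'g \<Rightarrow> 'g word set" where
  "gen_elem S R g = pres_rel S R `` {[(g, False)]}"

definition normal_closure :: "('a, 'b) monoid_scheme \<Rightarrow> 'a set \<Rightarrow> 'a set" where
  "normal_closure G A = \<Inter> {N. N \<lhd> G \<and> A \<subseteq> N}"

datatype vb_gen = Sig nat | Rho nat

definition vb_gens :: "nat \<Rightarrow> vb_gen set" where
  "vb_gens n = {Sig i | i. 1 \<le> i \<and> i \<le> n - 1} \<union> {Rho i | i. 1 \<le> i \<and> i \<le> n - 1}"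

definition g :: "vb_gen \<Rightarrow> vb_gen word" where
  "g a = [(a, False)]"

definition vb_rels :: "nat \<Rightarrow> (vb_gen word \<times> vb_gen word) set" where
  "vb_rels n =
     {(g (Sig i) @ g (Sig (i+1)) @ g (Sig i), g (Sig (i+1)) @ g (Sig i) @ g (Sig (i+1))) | i. 1 \<le> i \<and> i \<le> n - 2}
   \<union> {(g (Sig i) @ g (Sig j), g (Sig j) @ g (Sig i)) | i j.
        1 \<le> i \<and> i \<le> n - 1 \<and> 1 \<le> j \<and> j \<le> n - 1 \<and> (i \<ge> j + 2 \<or> j \<ge> i + 2)}
   \<union> {(g (Rho i) @ g (Rho (i+1)) @ g (Rho i), g (Rho (i+1)) @ g (Rho i) @ g (Rho (i+1))) | i. 1 \<le> i \<and> i \<le> n - 2}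
   \<union> {(g (Rho i) @ g (Rho j), g (Rho j) @ g (Rho i)) | i j.
        1 \<le> i \<and> i \<le> n - 1 \<and> 1 \<le> j \<and> j \<le> n - 1 \<and> (i \<ge> j + 2 \<or> j \<ge> i + 2)}
   \<union> {(g (Rho i) @ g (Rho i), []) | i. 1 \<le> i \<and> i \<le> n - 1}
   \<union> {(g (Sig i) @ g (Rho j), g (Rho j) @ g (Sig i)) | i j.
        1 \<le> i \<and> i \<le> n - 1 \<and> 1 \<le> j \<and> j \<le> n - 1 \<and> (i \<ge> j + 2 \<or> j \<ge> i + 2)}
   \<union> {(g (Rho i) @ g (Rho (i+1)) @ g (Sig i), g (Sig (i+1)) @ g (Rho i) @ g (Rho (i+1))) | i. 1 \<le> i \<and> i \<le> n - 2}"

definition VB :: "nat \<Rightarrow> vb_gen word set monoid" where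
  "VB n = presented_group (vb_gens n) (vb_rels n)"

definition vb_elem :: "nat \<Rightarrow> vb_gen word \<Rightarrow> vb_gen word set" where
  "vb_elem n w = pres_rel (vb_gens n) (vb_rels n) `` {w}"

definition x_word :: "nat \<Rightarrow> nat \<Rightarrow> vb_gen word" where
  "x_word k l =
     (if k < l then
        map (\<lambda>m. (Rho m, False)) (rev [k+1..<l]) @ g (Sig k) @ map (\<lambda>m. (Rho m, False)) [k+1..<l]
      else
        map (\<lambda>m. (Rho m, False)) (rev [l..<k]) @ g (Sig l) @ map (\<lambda>m. (Rho m, False)) [l..<k])"

definition x_elem :: "nat \<Rightarrow> nat \<Rightarrow> nat \<Rightarrow> vb_gen word set" where
  "x_elem n k l = vb_elem n (x_word k l)"

definition H :: "nat \<Rightarrow> vb_gen word set set" where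
  "H n = normal_closure (VB n) {vb_elem n (g (Sig i)) | i. 1 \<le> i \<and> i \<le> n - 1}"

definition x_gens :: "nat \<Rightarrow> (nat \<times> nat) set" where
  "x_gens n = {(k, l). 1 \<le> k \<and> k \<le> n \<and> 1 \<le> l \<and> l \<le> n \<and> k \<noteq> l}"

definition xg :: "nat \<Rightarrow> nat \<Rightarrow> (nat \<times> nat) word" where
  "xg k l = [((k, l), False)]"

definition x_rels :: "nat \<Rightarrow> ((nat \<times> nat) word \<times> (nat \<times> nat) word) set" where
  "x_rels n =
     {(xg i j @ xg k l, xg k l @ xg i j) | i j k l.
        (i, j) \<in> x_gens n \<and> (k, l) \<in> x_gens n \<and> distinct [i, j, k, l]}
   \<union> {(xg i k @ xg k j @ xg i k, xg k j @ xg i k @ xg k j) | i j k.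
        (i, k) \<in> x_gens n \<and> (k, j) \<in> x_gens n \<and> distinct [i, j, k]}"

definition P :: "nat \<Rightarrow> (nat \<times> nat) word set monoid" where
  "P n = presented_group (x_gens n) (x_rels n)"

end

theory Submission
  imports Defs "HOL-Combinatorics.Permutations"
begin

definition ev :: "('b,'c) monoid_scheme \<Rightarrow> ('a \<Rightarrow> 'b) \<Rightarrow> 'a word \<Rightarrow> 'b" where
  "ev G f w = foldr (\<lambda>ab x. (if snd ab then inv\<^bsub>G\<^esub> (f (fst ab)) else f (fst ab)) \<otimes>\<^bsub>G\<^esub> x) w \<one>\<^bsub>G\<^esub>"

lemma ev_Nil[simp]: "ev G f [] = \<one>\<^bsub>G\<^esub>" by (simp add: ev_def)
lemma ev_Cons[simp]: "ev G f (ab # w) = (if snd ab then inv\<^bsub>G\<^esub> (f (fst ab)) else f (fst ab)) \<otimes>\<^bsub>G\<^esub> ev G f w"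
  by (simp add: ev_def)

lemma words_Nil[simp]: "[] \<in> words S" by (simp add: words_def)
lemma words_append[simp]: "u @ v \<in> words S \<longleftrightarrow> u \<in> words S \<and> v \<in> words S" by (auto simp: words_def)
lemma words_Cons[simp]: "x # v \<in> words S \<longleftrightarrow> fst x \<in> S \<and> v \<in> words S" by (auto simp: words_def)

lemma (in group) ev_closed: "f \<in> S \<rightarrow> carrier G \<Longrightarrow> w \<in> words S \<Longrightarrow> ev G f w \<in> carrier G"
  by (induction w) auto

lemma (in group) ev_append: "f \<in> S \<rightarrow> carrier G \<Longrightarrow> u \<in> words S \<Longrightarrow> v \<in> words S \<Longrightarrow>
   ev G f (u @ v) = ev G f u \<otimes> ev G f v"
proof (induction u)
  case (Cons x u)
  assume f: "f \<in> S \<rightarrow> carrier G" and u: "x # u \<in> words S" and v: "v \<in> words S"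
  have c: "f (fst x) \<in> carrier G" "ev G f u \<in> carrier G" "ev G f v \<in> carrier G"
    using f u v by (auto intro: ev_closed)
  show ?case using Cons c by (simp add: m_assoc)
qed (metis ev_closed l_one ev_Nil append_Nil)

lemma inv_word_Nil[simp]: "inv_word [] = []" by (simp add: inv_word_def)
lemma inv_word_Cons[simp]: "inv_word (x # w) = inv_word w @ [(fst x, \<not> snd x)]"
  by (cases x) (simp add: inv_word_def)
lemma inv_word_words[simp]: "inv_word w \<in> words S \<longleftrightarrow> w \<in> words S"
  by (induction w) auto

definition lift :: "('b,'c) monoid_scheme \<Rightarrow> ('a \<Rightarrow> 'b) \<Rightarrow> 'a word set \<Rightarrow> 'b" where
  "lift G f A = ev G f (SOME w. w \<in> A)"

locale presg =
  fixes S :: "'g set" and R :: "('g word \<times> 'g word) set"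
  assumes R_words: "R \<subseteq> words S \<times> words S"
begin

abbreviation "PG \<equiv> presented_group S R"
abbreviation "cls w \<equiv> pres_rel S R `` {w}"
abbreviation "peq \<equiv> pres_eq S R"

lemma pe_words: "peq u v \<Longrightarrow> u \<in> words S \<longleftrightarrow> v \<in> words S"
  by (induction rule: pres_eq.induct) (use R_words in auto)

lemma pr_iff[simp]: "(u, v) \<in> pres_rel S R \<longleftrightarrow> u \<in> words S \<and> v \<in> words S \<and> peq u v"
  by (simp add: pres_rel_def)

lemma in_cls: "v \<in> cls u \<longleftrightarrow> u \<in> words S \<and> v \<in> words S \<and> peq u v"
  by (simp add: pres_rel_def)

lemma cls_eq: assumes u: "u \<in> words S" and v: "v \<in> words S" shows "cls u = cls v \<longleftrightarrow> peq u v"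
proof
  assume e: "cls u = cls v"
  have "v \<in> cls v" using v by (simp add: in_cls pres_eq.refl)
  then have "v \<in> cls u" using e by simp
  then show "peq u v" using in_cls by blast
next
  assume e: "peq u v"
  have e': "peq v u" using e by (rule pres_eq.sym)
  show "cls u = cls v" using u v e e' by (auto intro: pres_eq.trans)
qed

lemma carrier_PG: "carrier PG = cls ` words S"
  by (auto simp: presented_group_def quotient_def)

lemma some_cls: "u \<in> words S \<Longrightarrow> (SOME x. x \<in> cls u) \<in> cls u"
  by (rule someI[of _ u]) (simp add: in_cls pres_eq.refl)

lemma mult_cls: "u \<in> words S \<Longrightarrow> v \<in> words S \<Longrightarrow> cls u \<otimes>\<^bsub>PG\<^esub> cls v = cls (u @ v)"
proof -
  assume u: "u \<in> words S" and v: "v \<in> words S"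
  define x where "x = (SOME x. x \<in> cls u)"
  define y where "y = (SOME x. x \<in> cls v)"
  have x: "x \<in> words S" "peq u x" using some_cls[OF u] by (auto simp: x_def in_cls)
  have y: "y \<in> words S" "peq v y" using some_cls[OF v] by (auto simp: y_def in_cls)
  have "cls (x @ y) = cls (u @ v)"
    using x y u v by (subst cls_eq) (auto intro: pres_eq.sym pres_eq.congr)
  then show ?thesis by (simp add: presented_group_def x_def y_def)
qed

lemma one_PG: "\<one>\<^bsub>PG\<^esub> = cls []" by (simp add: presented_group_def)

lemma cls_in: "u \<in> words S \<Longrightarrow> cls u \<in> carrier PG" by (simp add: carrier_PG)

lemma pe_inv: "u \<in> words S \<Longrightarrow> peq (inv_word u @ u) []"
proof (induction u)
  case Nil then show ?case by (simp add: pres_eq.refl)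
next
  case (Cons x u)
  obtain a b where x: "x = (a, b)" by force
  have a: "a \<in> S" using Cons x by simp
  have "peq (inv_word u @ ([(a, \<not> b), (a, b)] @ u)) (inv_word u @ ([] @ u))"
    using pres_eq.cancel[OF a, where b="\<not> b"]
    by (intro pres_eq.congr pres_eq.refl) simp
  then have "peq (inv_word (x # u) @ x # u) (inv_word u @ u)" by (simp add: x)
  then show ?case using Cons by (auto intro: pres_eq.trans)
qed

lemma group_PG: "group PG"
proof (rule groupI)
  fix x y assume "x \<in> carrier PG" "y \<in> carrier PG"
  then show "x \<otimes>\<^bsub>PG\<^esub> y \<in> carrier PG" by (auto simp: carrier_PG mult_cls)
next
  show "\<one>\<^bsub>PG\<^esub> \<in> carrier PG" by (simp add: one_PG cls_in)
next
  fix x y z assume "x \<in> carrier PG" "y \<in> carrier PG" "z \<in> carrier PG"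
  then show "x \<otimes>\<^bsub>PG\<^esub> y \<otimes>\<^bsub>PG\<^esub> z = x \<otimes>\<^bsub>PG\<^esub> (y \<otimes>\<^bsub>PG\<^esub> z)"
    by (auto simp: carrier_PG mult_cls)
next
  fix x assume "x \<in> carrier PG"
  then show "\<one>\<^bsub>PG\<^esub> \<otimes>\<^bsub>PG\<^esub> x = x" by (auto simp: carrier_PG mult_cls one_PG)
next
  fix x assume "x \<in> carrier PG"
  then obtain u where u: "u \<in> words S" "x = cls u" by (auto simp: carrier_PG)
  have "cls (inv_word u) \<otimes>\<^bsub>PG\<^esub> x = \<one>\<^bsub>PG\<^esub>"
    using u pe_inv[OF u(1)] by (simp add: mult_cls one_PG cls_eq)
  then show "\<exists>y\<in>carrier PG. y \<otimes>\<^bsub>PG\<^esub> x = \<one>\<^bsub>PG\<^esub>" using u by (intro bexI[of _ "cls (inv_word u)"]) (auto simp: cls_in)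
qed

lemma gen_cls: "gen_elem S R a = cls [(a, False)]" by (simp add: gen_elem_def)

lemma inv_gen: "a \<in> S \<Longrightarrow> inv\<^bsub>PG\<^esub> (cls [(a, False)]) = cls [(a, True)]"
proof -
  assume a: "a \<in> S"
  interpret group PG by (rule group_PG)
  have "cls [(a, True)] \<otimes>\<^bsub>PG\<^esub> cls [(a, False)] = \<one>\<^bsub>PG\<^esub>"
    using a pres_eq.cancel[OF a, where b=True] by (simp add: mult_cls one_PG cls_eq)
  then show ?thesis using a by (simp add: cls_in inv_equality)
qed

lemma cls_ev: "w \<in> words S \<Longrightarrow> cls w = ev PG (gen_elem S R) w"
proof (induction w)
  case Nil then show ?case by (simp add: one_PG)
next
  case (Cons x w)
  obtain a b where x: "x = (a, b)" by force
  have a: "a \<in> S" "w \<in> words S" using Cons x by auto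
  have "cls (x # w) = cls [(a, b)] \<otimes>\<^bsub>PG\<^esub> cls w" using a by (simp add: mult_cls x)
  then show ?case using Cons a by (cases b) (simp_all add: x gen_cls inv_gen)
qed

lemma carrier_gen: "carrier PG = generate PG (gen_elem S R ` S)"
proof
  interpret group PG by (rule group_PG)
  show "carrier PG \<subseteq> generate PG (gen_elem S R ` S)"
  proof
    fix x assume "x \<in> carrier PG"
    then obtain w where w: "w \<in> words S" "x = cls w" by (auto simp: carrier_PG)
    have "ev PG (gen_elem S R) w \<in> generate PG (gen_elem S R ` S)" using w(1)
    proof (induction w)
      case Nil then show ?case by (simp add: generate.one)
    next
      case (Cons ab w)
      then have i: "gen_elem S R (fst ab) \<in> gen_elem S R ` S" by simp
      show ?case
      proof (cases "snd ab")
        case True then show ?thesis using Cons generate.eng[OF generate.inv[OF i], where G=PG] by simp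
      next
        case False then show ?thesis using Cons generate.eng[OF generate.incl[OF i], where G=PG] by simp
      qed
    qed
    then show "x \<in> generate PG (gen_elem S R ` S)" using w cls_ev by simp
  qed
  show "generate PG (gen_elem S R ` S) \<subseteq> carrier PG"
    by (rule generate_incl) (auto simp: gen_cls cls_in)
qed

context
  fixes G :: "('b, 'c) monoid_scheme" and f
  assumes G: "group G" and f: "f \<in> S \<rightarrow> carrier G" and rels: "\<And>l r. (l, r) \<in> R \<Longrightarrow> ev G f l = ev G f r"
begin

lemma ev_resp: "peq u v \<Longrightarrow> u \<in> words S \<Longrightarrow> ev G f u = ev G f v"
proof (induction rule: pres_eq.induct)
  case (sym u v)
  then show ?case using pe_words by metis
next
  case (trans u v w)
  then show ?case using pe_words by metis
next
  case (cancel a b)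
  interpret group G by (rule G)
  have "f a \<in> carrier G" using cancel f by auto
  then show ?case by (cases b) auto
next
  case (rel l r) then show ?case using rels by simp
next
  case (congr u u' v v')
  interpret group G by (rule G)
  have "u' \<in> words S" "v' \<in> words S" using congr pe_words by auto
  then show ?case using congr f by (simp add: ev_append)
qed simp

lemma lift_cls: "w \<in> words S \<Longrightarrow> lift G f (cls w) = ev G f w"
  unfolding lift_def using some_cls[of w] by (auto simp: in_cls intro!: ev_resp[symmetric])

lemma lift_hom: "lift G f \<in> hom PG G"
proof (rule homI)
  interpret group G by (rule G)
  fix x assume "x \<in> carrier PG"
  then show "lift G f x \<in> carrier G" using f by (auto simp: carrier_PG lift_cls ev_closed)
next
  interpret group G by (rule G)
  fix x y assume "x \<in> carrier PG" "y \<in> carrier PG"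
  then show "lift G f (x \<otimes>\<^bsub>PG\<^esub> y) = lift G f x \<otimes>\<^bsub>G\<^esub> lift G f y"
    using f by (auto simp: carrier_PG lift_cls mult_cls ev_append)
qed

lemma lift_gen: "a \<in> S \<Longrightarrow> lift G f (gen_elem S R a) = f a"
proof -
  interpret group G by (rule G)
  assume a: "a \<in> S" then have "f a \<in> carrier G" using f by auto
  then show ?thesis using a by (auto simp: gen_cls lift_cls)
qed

end

lemma hom_unique:
  assumes K: "group K" and h1: "h1 \<in> hom PG K" and h2: "h2 \<in> hom PG K"
    and e: "\<And>a. a \<in> S \<Longrightarrow> h1 (gen_elem S R a) = h2 (gen_elem S R a)"
    and x: "x \<in> carrier PG"
  shows "h1 x = h2 x"
proof -
  interpret PG: group PG by (rule group_PG)
  interpret K: group K by (rule K)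
  interpret g1: group_hom PG K h1 by (rule group_hom.intro, unfold_locales, rule h1)
  interpret g2: group_hom PG K h2 by (rule group_hom.intro, unfold_locales, rule h2)
  obtain w where w: "w \<in> words S" "x = cls w" using x by (auto simp: carrier_PG)
  have "h1 (ev PG (gen_elem S R) w) = h2 (ev PG (gen_elem S R) w)" using w(1)
  proof (induction w)
    case Nil then show ?case by simp
  next
    case (Cons ab w)
    have c: "gen_elem S R (fst ab) \<in> carrier PG" "ev PG (gen_elem S R) w \<in> carrier PG"
      using Cons PG.ev_closed[of "gen_elem S R" S w] by (auto simp: gen_cls cls_in)
    then show ?case using Cons e by (auto simp: g1.hom_inv g2.hom_inv)
  qed
  then show ?thesis using w cls_ev by simp
qed

end

abbreviation veq :: "nat \<Rightarrow> vb_gen word \<Rightarrow> vb_gen word \<Rightarrow> bool" where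
  "veq n \<equiv> pres_eq (vb_gens n) (vb_rels n)"
abbreviation rl :: "nat \<Rightarrow> vb_gen \<times> bool" where "rl m \<equiv> (Rho m, False)"
abbreviation sl :: "nat \<Rightarrow> vb_gen \<times> bool" where "sl m \<equiv> (Sig m, False)"
abbreviation rw :: "nat list \<Rightarrow> vb_gen word" where "rw L \<equiv> map rl L"
definition cw :: "nat list \<Rightarrow> vb_gen word \<Rightarrow> vb_gen word" where
  "cw L B = rw (rev L) @ B @ rw L"

declare pres_eq.trans[trans]

lemma vref: "veq n u u" by (rule pres_eq.refl)
lemma vsym: "veq n u v \<Longrightarrow> veq n v u" by (rule pres_eq.sym)
lemma vsub: "veq n u v \<Longrightarrow> veq n (p @ u @ q) (p @ v @ q)"
  by (intro pres_eq.congr pres_eq.refl)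
lemma vstep: "veq n u v \<Longrightarrow> ww = p @ u @ q \<Longrightarrow> zz = p @ v @ q \<Longrightarrow> veq n ww zz"
  using vsub by blast
lemma vstep': "veq n v u \<Longrightarrow> ww = p @ u @ q \<Longrightarrow> zz = p @ v @ q \<Longrightarrow> veq n ww zz"
  using vsub vsym by blast

lemma R_ss_braid: "1 \<le> i \<Longrightarrow> i + 2 \<le> n \<Longrightarrow> veq n [sl i, sl (i+1), sl i] [sl (i+1), sl i, sl (i+1)]"
  by (rule pres_eq.rel) (auto simp: vb_rels_def g_def)
lemma R_ss_comm: "1 \<le> i \<Longrightarrow> i < n \<Longrightarrow> 1 \<le> j \<Longrightarrow> j < n \<Longrightarrow> i + 2 \<le> j \<or> j + 2 \<le> i \<Longrightarrow>
   veq n [sl i, sl j] [sl j, sl i]"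
  by (rule pres_eq.rel) (auto simp: vb_rels_def g_def)
lemma R_rr_braid: "1 \<le> i \<Longrightarrow> i + 2 \<le> n \<Longrightarrow> veq n [rl i, rl (i+1), rl i] [rl (i+1), rl i, rl (i+1)]"
  by (rule pres_eq.rel) (auto simp: vb_rels_def g_def)
lemma R_rr_comm: "1 \<le> i \<Longrightarrow> i < n \<Longrightarrow> 1 \<le> j \<Longrightarrow> j < n \<Longrightarrow> i + 2 \<le> j \<or> j + 2 \<le> i \<Longrightarrow>
   veq n [rl i, rl j] [rl j, rl i]"
  by (rule pres_eq.rel) (auto simp: vb_rels_def g_def)
lemma R_rr: "1 \<le> i \<Longrightarrow> i < n \<Longrightarrow> veq n [rl i, rl i] []"
  by (rule pres_eq.rel) (auto simp: vb_rels_def g_def)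
lemma R_sr_comm: "1 \<le> i \<Longrightarrow> i < n \<Longrightarrow> 1 \<le> j \<Longrightarrow> j < n \<Longrightarrow> i + 2 \<le> j \<or> j + 2 \<le> i \<Longrightarrow>
   veq n [sl i, rl j] [rl j, sl i]"
  by (rule pres_eq.rel) (auto simp: vb_rels_def g_def)
lemma R_mixed: "1 \<le> i \<Longrightarrow> i + 2 \<le> n \<Longrightarrow> veq n [rl i, rl (i+1), sl i] [sl (i+1), rl i, rl (i+1)]"
  by (rule pres_eq.rel) (auto simp: vb_rels_def g_def)

lemma far_comm:
  assumes m: "1 \<le> m" "m < n" and L: "\<forall>j\<in>set L. 1 \<le> j \<and> j < n \<and> (j + 2 \<le> m \<or> m + 2 \<le> j)"
  shows "veq n (rl m # rw L) (rw L @ [rl m])"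
  using L
proof (induction L)
  case Nil then show ?case by (simp add: vref)
next
  case (Cons j L)
  have "veq n (rl m # rw (j # L)) ([rl j, rl m] @ rw L)"
    by (rule vstep[OF R_rr_comm[of m n j], where p="[]" and q="rw L"]) (use m Cons in auto)
  also have "veq n ([rl j, rl m] @ rw L) ([rl j] @ (rw L @ [rl m]))"
    by (rule vstep[where p="[rl j]" and q="[]"], rule Cons.IH) (use Cons in auto)
  finally show ?case by simp
qed

lemma rw_inv:
  assumes L: "\<forall>j\<in>set L. 1 \<le> j \<and> j < n"
  shows "veq n (rw L @ rw (rev L)) []"
  using L
proof (induction L)
  case Nil then show ?case by (simp add: vref)
next
  case (Cons j L)
  have "veq n (rw (j # L) @ rw (rev (j # L))) ([rl j] @ [] @ [rl j])"
    by (rule vstep[where p="[rl j]" and q="[rl j]"], rule Cons.IH) (use Cons in auto)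
  also have "veq n ([rl j] @ [] @ [rl j]) []" using R_rr[of j n] Cons by simp
  finally show ?case .
qed

lemma rw_inv': "\<forall>j\<in>set L. 1 \<le> j \<and> j < n \<Longrightarrow> veq n (rw (rev L) @ rw L) []"
  using rw_inv[of "rev L" n] by simp

lemma shift_a:
  "1 \<le> a \<Longrightarrow> a \<le> m \<Longrightarrow> m + 1 < b \<Longrightarrow> b \<le> n \<Longrightarrow> veq n (rw [a..<b] @ [rl m]) (rl (m+1) # rw [a..<b])"
proof (induction "b - a" arbitrary: a)
  case 0 then show ?case by simp
next
  case (Suc d)
  have ab: "[a..<b] = a # [a+1..<b]" using Suc by (simp add: upt_conv_Cons)
  show ?case
  proof (cases "m = a")
    case True
    have ab2: "[a+1..<b] = (a+1) # [a+2..<b]" using Suc True by (simp add: upt_conv_Cons)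
    have "veq n (rw [a..<b] @ [rl m]) ([rl a, rl (a+1)] @ (rl a # rw [a+2..<b]) @ [])"
      by (rule vstep'[where p="[rl a, rl (a+1)]" and q="[]"], rule far_comm) (use Suc True ab ab2 in auto)
    also have "veq n ([rl a, rl (a+1)] @ (rl a # rw [a+2..<b]) @ []) ([] @ [rl (a+1), rl a, rl (a+1)] @ rw [a+2..<b])"
      by (rule vstep[OF R_rr_braid]) (use Suc True in auto)
    finally show ?thesis using ab ab2 True by simp
  next
    case False
    have "veq n (rw [a..<b] @ [rl m]) ([rl a] @ (rw [a+1..<b] @ [rl m]) @ [])" using ab by (simp add: vref)
    also have "veq n ([rl a] @ (rw [a+1..<b] @ [rl m]) @ []) ([rl a] @ (rl (m+1) # rw [a+1..<b]) @ [])"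
      by (rule vsub, rule Suc.hyps) (use Suc False in auto)
    also have "veq n ([rl a] @ (rl (m+1) # rw [a+1..<b]) @ []) ([] @ [rl (m+1), rl a] @ rw [a+1..<b])"
      by (rule vstep[OF R_rr_comm[of a n "m+1"], where p="[]" and q="rw [a+1..<b]"]) (use Suc False in auto)
    finally show ?thesis using ab by simp
  qed
qed

lemma shift_b:
  assumes "1 \<le> a" "a \<le> m" "m + 1 < b" "b \<le> n"
  shows "veq n (rl m # rw (rev [a..<b])) (rw (rev [a..<b]) @ [rl (m+1)])"
proof -
  have L: "\<forall>j\<in>set [a..<b]. 1 \<le> j \<and> j < n" using assms by auto
  have "veq n (rl m # rw (rev [a..<b])) ((rw (rev [a..<b]) @ rw [a..<b]) @ (rl m # rw (rev [a..<b])) @ [])"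
    by (rule vstep'[where p="[]" and q="rl m # rw (rev [a..<b])"], rule rw_inv'[OF L]) simp_all
  also have "veq n \<dots> (rw (rev [a..<b]) @ (rl (m+1) # rw [a..<b]) @ rw (rev [a..<b]))"
    by (rule vstep[where p="rw (rev [a..<b])" and q="rw (rev [a..<b])"], rule shift_a) (use assms in auto)
  also have "veq n \<dots> ((rw (rev [a..<b]) @ [rl (m+1)]) @ [] @ [])"
    by (rule vstep[where p="rw (rev [a..<b]) @ [rl (m+1)]" and q="[]"], rule rw_inv[OF L]) simp_all
  finally show ?thesis by simp
qed

lemma G1:
  assumes m: "1 \<le> m" "m < n" and L: "\<forall>j\<in>set L. 1 \<le> j \<and> j < n \<and> (j + 2 \<le> m \<or> m + 2 \<le> j)"
    and B: "veq n (rl m # B @ [rl m]) B'"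
  shows "veq n (rl m # cw L B @ [rl m]) (cw L B')"
proof -
  have L': "\<forall>j\<in>set (rev L). 1 \<le> j \<and> j < n \<and> (j + 2 \<le> m \<or> m + 2 \<le> j)" using L by simp
  have "veq n (rl m # cw L B @ [rl m]) ((rw (rev L) @ [rl m]) @ (B @ rw L @ [rl m]))"
    unfolding cw_def by (rule vstep[where p="[]" and q="B @ rw L @ [rl m]"], rule far_comm[OF m L']) simp_all
  also have "veq n \<dots> ((rw (rev L) @ [rl m] @ B) @ (rl m # rw L) @ [])"
    by (rule vstep'[where p="rw (rev L) @ [rl m] @ B" and q="[]"], rule far_comm[OF m L]) simp_all
  also have "veq n \<dots> (rw (rev L) @ B' @ rw L)"
    by (rule vstep[where p="rw (rev L)" and q="rw L"], rule B) simp_all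
  finally show ?thesis by (simp add: cw_def)
qed

lemma conj_comm: "veq n (rl m # B) (B @ [rl m]) \<Longrightarrow> 1 \<le> m \<Longrightarrow> m < n \<Longrightarrow> veq n (rl m # B @ [rl m]) B"
proof -
  assume h: "veq n (rl m # B) (B @ [rl m])" and m: "1 \<le> m" "m < n"
  have "veq n (rl m # B @ [rl m]) ([] @ (B @ [rl m]) @ [rl m])"
    by (rule vstep[OF h, where p="[]" and q="[rl m]"]) simp_all
  also have "veq n \<dots> (B @ [] @ [])" by (rule vstep[OF R_rr[OF m], where p=B and q="[]"]) simp_all
  finally show ?thesis by simp
qed

lemma G3:
  assumes "1 \<le> a" "a \<le> m" "m + 1 < b" "b \<le> n"
    and B: "veq n (rl (m+1) # B @ [rl (m+1)]) B"
  shows "veq n (rl m # cw [a..<b] B @ [rl m]) (cw [a..<b] B)"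
proof -
  have "veq n (rl m # cw [a..<b] B @ [rl m]) ((rw (rev [a..<b]) @ [rl (m+1)]) @ B @ rw [a..<b] @ [rl m])"
    unfolding cw_def by (rule vstep[where p="[]" and q="B @ rw [a..<b] @ [rl m]"], rule shift_b) (use assms in auto)
  also have "veq n \<dots> ((rw (rev [a..<b]) @ [rl (m+1)] @ B) @ (rl (m+1) # rw [a..<b]) @ [])"
    by (rule vstep[where q="[]"], rule shift_a) (use assms in auto)
  also have "veq n \<dots> (rw (rev [a..<b]) @ B @ rw [a..<b])"
    by (rule vstep[where p="rw (rev [a..<b])" and q="rw [a..<b]"], rule B) simp_all
  finally show ?thesis by (simp add: cw_def)
qed


context
  fixes i n :: nat
  assumes i: "1 \<le> i" "i + 2 \<le> n"
begin

lemma W2: "veq n [rl i, rl (i+1), sl i, rl (i+1), rl i] [sl (i+1)]"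
proof -
  have "veq n [rl i, rl (i+1), sl i, rl (i+1), rl i] ([] @ [sl (i+1), rl i, rl (i+1)] @ [rl (i+1), rl i])"
    by (rule vstep[OF R_mixed[OF i], where p="[]" and q="[rl (i+1), rl i]"]) simp_all
  also have "veq n \<dots> ([sl (i+1), rl i] @ [] @ [rl i])"
    by (rule vstep[OF R_rr, where p="[sl (i+1), rl i]" and q="[rl i]"]) (use i in simp_all)
  also have "veq n \<dots> ([sl (i+1)] @ [] @ [])"
    by (rule vstep[OF R_rr, where p="[sl (i+1)]" and q="[]"]) (use i in simp_all)
  finally show ?thesis by simp
qed

lemma W1: "veq n [rl i, sl (i+1), rl i] [rl (i+1), sl i, rl (i+1)]"
proof -
  have "veq n [rl i, sl (i+1), rl i] ([rl i] @ [rl i, rl (i+1), sl i, rl (i+1), rl i] @ [rl i])"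
    by (rule vstep'[OF W2, where p="[rl i]" and q="[rl i]"]) simp_all
  also have "veq n \<dots> ([] @ [] @ [rl (i+1), sl i, rl (i+1), rl i, rl i])"
    by (rule vstep[OF R_rr, where p="[]" and q="[rl (i+1), sl i, rl (i+1), rl i, rl i]"]) (use i in simp_all)
  also have "veq n \<dots> ([rl (i+1), sl i, rl (i+1)] @ [] @ [])"
    by (rule vstep[OF R_rr, where p="[rl (i+1), sl i, rl (i+1)]" and q="[]"]) (use i in simp_all)
  finally show ?thesis by simp
qed

lemma W3: "veq n [rl i, rl (i+1), sl (i+1), rl (i+1), rl i] [rl (i+1), rl i, sl i, rl i, rl (i+1)]"
proof -
  have "veq n [rl i, rl (i+1), sl (i+1), rl (i+1), rl i]
     ([rl i, rl (i+1)] @ [rl i, rl (i+1), sl i, rl (i+1), rl i] @ [rl (i+1), rl i])"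
    by (rule vstep'[OF W2, where p="[rl i, rl (i+1)]" and q="[rl (i+1), rl i]"]) simp_all
  also have "veq n \<dots> ([] @ [rl (i+1), rl i, rl (i+1)] @ [rl (i+1), sl i, rl (i+1), rl i, rl (i+1), rl i])"
    by (rule vstep[OF R_rr_braid[OF i], where p="[]" and q="[rl (i+1), sl i, rl (i+1), rl i, rl (i+1), rl i]"]) simp_all
  also have "veq n \<dots> ([rl (i+1), rl i] @ [] @ [sl i, rl (i+1), rl i, rl (i+1), rl i])"
    by (rule vstep[OF R_rr, where p="[rl (i+1), rl i]" and q="[sl i, rl (i+1), rl i, rl (i+1), rl i]"]) (use i in simp_all)
  also have "veq n \<dots> ([rl (i+1), rl i, sl i] @ [rl i, rl (i+1), rl i] @ [rl i])"
    by (rule vstep'[OF R_rr_braid[OF i], where p="[rl (i+1), rl i, sl i]" and q="[rl i]"]) simp_all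
  also have "veq n \<dots> ([rl (i+1), rl i, sl i, rl i, rl (i+1)] @ [] @ [])"
    by (rule vstep[OF R_rr, where p="[rl (i+1), rl i, sl i, rl i, rl (i+1)]" and q="[]"]) (use i in simp_all)
  finally show ?thesis by simp
qed

lemma W4: "veq n [rl i, rl (i+1), rl i, sl i, rl i, rl (i+1), rl i] [rl (i+1), sl (i+1), rl (i+1)]"
proof -
  have "veq n [rl i, rl (i+1), rl i, sl i, rl i, rl (i+1), rl i]
     ([] @ [rl (i+1), rl i, rl (i+1)] @ [sl i, rl i, rl (i+1), rl i])"
    by (rule vstep[OF R_rr_braid[OF i], where p="[]" and q="[sl i, rl i, rl (i+1), rl i]"]) simp_all
  also have "veq n \<dots> ([rl (i+1), rl i, rl (i+1), sl i] @ [rl (i+1), rl i, rl (i+1)] @ [])"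
    by (rule vstep[OF R_rr_braid[OF i], where p="[rl (i+1), rl i, rl (i+1), sl i]" and q="[]"]) simp_all
  also have "veq n \<dots> ([rl (i+1)] @ [sl (i+1)] @ [rl (i+1)])"
    by (rule vstep[OF W2, where p="[rl (i+1)]" and q="[rl (i+1)]"]) simp_all
  finally show ?thesis by simp
qed

end

definition sw :: "nat \<Rightarrow> nat \<Rightarrow> nat" where
  "sw m x = (if x = m then m + 1 else if x = m + 1 then m else x)"

lemma sw_sw[simp]: "sw m (sw m x) = x" by (simp add: sw_def)
lemma sw_inj: "sw m x = sw m y \<longleftrightarrow> x = y" by (metis sw_sw)

lemma xw_lt: "k < l \<Longrightarrow> x_word k l = cw [k+1..<l] [sl k]"
  by (simp add: x_word_def cw_def g_def rev_map)
lemma xw_gt: "l < k \<Longrightarrow> x_word k l = cw [l+1..<k] [rl l, sl l, rl l]"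
  by (simp add: x_word_def cw_def g_def rev_map upt_conv_Cons)


lemma conj_far_s: "1 \<le> m \<Longrightarrow> m < n \<Longrightarrow> 1 \<le> j \<Longrightarrow> j < n \<Longrightarrow> j + 2 \<le> m \<or> m + 2 \<le> j \<Longrightarrow>
  veq n (rl m # [sl j] @ [rl m]) [sl j]"
proof -
  assume a: "1 \<le> m" "m < n" "1 \<le> j" "j < n" "j + 2 \<le> m \<or> m + 2 \<le> j"
  have "veq n [sl j, rl m] [rl m, sl j]" by (rule R_sr_comm) (use a in auto)
  then have "veq n (rl m # [sl j]) ([sl j] @ [rl m])" by (simp add: vsym)
  then show ?thesis using conj_comm a by blast
qed

lemma conj_far_B:
  assumes "1 \<le> m" "m < n" "1 \<le> j" "j < n" "j + 2 \<le> m \<or> m + 2 \<le> j"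
  shows "veq n (rl m # [rl j, sl j, rl j] @ [rl m]) [rl j, sl j, rl j]"
proof (rule conj_comm)
  have "veq n (rl m # [rl j, sl j, rl j]) ([] @ [rl j, rl m] @ [sl j, rl j])"
    by (rule vstep[OF R_rr_comm, where p="[]" and q="[sl j, rl j]"]) (use assms in auto)
  also have "veq n \<dots> ([rl j] @ [sl j, rl m] @ [rl j])"
    by (rule vstep'[OF R_sr_comm, where p="[rl j]" and q="[rl j]"]) (use assms in auto)
  also have "veq n \<dots> ([rl j, sl j] @ [rl j, rl m] @ [])"
    by (rule vstep[OF R_rr_comm, where p="[rl j, sl j]" and q="[]"]) (use assms in auto)
  finally show "veq n (rl m # [rl j, sl j, rl j]) ([rl j, sl j, rl j] @ [rl m])" by simp
qed (use assms in auto)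

lemma conj_lt:
  assumes k: "1 \<le> k" "k < l" "l \<le> n" and m: "1 \<le> m" "m < n"
  shows "veq n (rl m # x_word k l @ [rl m]) (x_word (sw m k) (sw m l))"
proof -
  consider "m + 1 < k \<or> l < m" | "m + 1 = k" | "m = k" "l = k + 1" | "m = k" "k + 1 < l"
    | "k < m" "m + 1 < l" | "k < m" "m + 1 = l" | "m = l" using k by linarith
  then show ?thesis
  proof cases
    case 1
    then have sw: "sw m k = k" "sw m l = l" using k by (auto simp: sw_def)
    show ?thesis unfolding sw xw_lt[OF k(2)]
    proof (rule G1[OF m])
      show "\<forall>j\<in>set [k+1..<l]. 1 \<le> j \<and> j < n \<and> (j + 2 \<le> m \<or> m + 2 \<le> j)" using k 1 by auto
      show "veq n (rl m # [sl k] @ [rl m]) [sl k]" by (rule conj_far_s) (use k m 1 in auto)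
    qed
  next
    case 2
    then have sw: "sw m k = m" "sw m l = l" using k by (auto simp: sw_def)
    have e: "x_word m l = cw [k+1..<l] [rl k, sl m, rl k]"
      using 2 k by (simp add: xw_lt cw_def upt_conv_Cons)
    show ?thesis unfolding sw e xw_lt[OF k(2)]
      by (rule G1[OF m], simp, use k 2 in force) (use W1[of m n] 2 k m in simp_all)
  next
    case 3
    then show ?thesis by (simp add: sw_def x_word_def g_def vref)
  next
    case 4
    then have sw: "sw m k = k + 1" "sw m l = l" using k by (auto simp: sw_def)
    have e1: "x_word k l = cw [k+2..<l] [rl (k+1), sl k, rl (k+1)]"
      using 4 k by (simp add: xw_lt cw_def upt_conv_Cons)
    have e2: "x_word (k+1) l = cw [k+2..<l] [sl (k+1)]"
      using 4 k by (simp add: xw_lt)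
    show ?thesis unfolding sw e1 e2
      by (rule G1[OF m], simp, use k 4 in force) (use W2[of k n] 4 k in simp_all)
  next
    case 5
    then have sw: "sw m k = k" "sw m l = l" using k by (auto simp: sw_def)
    show ?thesis unfolding sw xw_lt[OF k(2)]
      by (rule G3[OF _ _ _ _ conj_far_s]) (use k m 5 in auto)
  next
    case 6
    then have sw: "sw m k = k" "sw m l = m" by (auto simp: sw_def)
    have e: "rl m # x_word k l @ [rl m] = [rl m, rl m] @ x_word k m @ [rl m, rl m]"
      using 6 k by (subgoal_tac "l = Suc m") (simp_all add: xw_lt cw_def)
    show ?thesis unfolding sw e
    proof -
      have "veq n ([rl m, rl m] @ x_word k m @ [rl m, rl m]) ([] @ [] @ x_word k m @ [rl m, rl m])"
        by (rule vstep[OF R_rr[OF m], where p="[]" and q="x_word k m @ [rl m, rl m]"]) simp_all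
      also have "veq n \<dots> (x_word k m @ [] @ [])"
        by (rule vstep[OF R_rr[OF m], where p="x_word k m" and q="[]"]) simp_all
      finally show "veq n ([rl m, rl m] @ x_word k m @ [rl m, rl m]) (x_word k m)" by simp
    qed
  next
    case 7
    then have sw: "sw m k = k" "sw m l = l + 1" using k by (auto simp: sw_def)
    show ?thesis unfolding sw using 7 k by (simp add: xw_lt cw_def vref)
  qed
qed

lemma conj_gt:
  assumes k: "1 \<le> l" "l < k" "k \<le> n" and m: "1 \<le> m" "m < n"
  shows "veq n (rl m # x_word k l @ [rl m]) (x_word (sw m k) (sw m l))"
proof -
  consider "m + 1 < l \<or> k < m" | "m + 1 = l" | "m = l" "k = l + 1" | "m = l" "l + 1 < k"
    | "l < m" "m + 1 < k" | "l < m" "m + 1 = k" | "m = k" using k by linarith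
  then show ?thesis
  proof cases
    case 1
    then have sw: "sw m k = k" "sw m l = l" using k by (auto simp: sw_def)
    show ?thesis unfolding sw xw_gt[OF k(2)]
    proof (rule G1[OF m])
      show "\<forall>j\<in>set [l+1..<k]. 1 \<le> j \<and> j < n \<and> (j + 2 \<le> m \<or> m + 2 \<le> j)" using k 1 by auto
      show "veq n (rl m # [rl l, sl l, rl l] @ [rl m]) [rl l, sl l, rl l]" by (rule conj_far_B) (use k m 1 in auto)
    qed
  next
    case 2
    then have sw: "sw m k = k" "sw m l = m" using k by (auto simp: sw_def)
    have e: "x_word k m = cw [l+1..<k] [rl l, rl m, sl m, rl m, rl l]"
      using 2 k by (simp add: xw_gt cw_def upt_conv_Cons)
    show ?thesis unfolding sw e xw_gt[OF k(2)]
      by (rule G1[OF m], simp, use k 2 in force) (use W3[of m n] 2 k m in simp_all)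
  next
    case 3
    then have sw: "sw m k = l" "sw m l = l + 1" by (auto simp: sw_def)
    have e: "rl m # x_word k l @ [rl m] = [rl l, rl l] @ [sl l] @ [rl l, rl l]"
      using 3 by (simp add: x_word_def g_def)
    have "veq n ([rl l, rl l] @ [sl l] @ [rl l, rl l]) ([] @ [] @ [sl l] @ [rl l, rl l])"
      by (rule vstep[OF R_rr, where p="[]" and q="[sl l] @ [rl l, rl l]"]) (use m 3 in simp_all)
    also have "veq n \<dots> ([sl l] @ [] @ [])"
      by (rule vstep[OF R_rr, where p="[sl l]" and q="[]"]) (use m 3 in simp_all)
    finally show ?thesis unfolding sw e by (simp add: x_word_def g_def)
  next
    case 4
    then have sw: "sw m k = k" "sw m l = l + 1" using k by (auto simp: sw_def)
    have e1: "x_word k l = cw [l+2..<k] [rl (l+1), rl l, sl l, rl l, rl (l+1)]"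
      using 4 k by (simp add: xw_gt cw_def upt_conv_Cons)
    have e2: "x_word k (l+1) = cw [l+2..<k] [rl (l+1), sl (l+1), rl (l+1)]"
      using 4 k by (simp add: xw_gt)
    show ?thesis unfolding sw e1 e2
      by (rule G1[OF m], simp, use k 4 in force) (use W4[of l n] 4 k in simp_all)
  next
    case 5
    then have sw: "sw m k = k" "sw m l = l" using k by (auto simp: sw_def)
    show ?thesis unfolding sw xw_gt[OF k(2)]
      by (rule G3[OF _ _ _ _ conj_far_B]) (use k m 5 in auto)
  next
    case 6
    then have sw: "sw m k = m" "sw m l = l" by (auto simp: sw_def)
    have e: "rl m # x_word k l @ [rl m] = [rl m, rl m] @ x_word m l @ [rl m, rl m]"
      using 6 k by (subgoal_tac "k = Suc m") (simp_all add: xw_gt cw_def)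
    show ?thesis unfolding sw e
    proof -
      have "veq n ([rl m, rl m] @ x_word m l @ [rl m, rl m]) ([] @ [] @ x_word m l @ [rl m, rl m])"
        by (rule vstep[OF R_rr[OF m], where p="[]" and q="x_word m l @ [rl m, rl m]"]) simp_all
      also have "veq n \<dots> (x_word m l @ [] @ [])"
        by (rule vstep[OF R_rr[OF m], where p="x_word m l" and q="[]"]) simp_all
      finally show "veq n ([rl m, rl m] @ x_word m l @ [rl m, rl m]) (x_word m l)" by simp
    qed
  next
    case 7
    then have sw: "sw m k = k + 1" "sw m l = l" using k by (auto simp: sw_def)
    show ?thesis unfolding sw using 7 k by (simp add: xw_gt cw_def vref)
  qed
qed

lemma conj_x:
  "(k, l) \<in> x_gens n \<Longrightarrow> 1 \<le> m \<Longrightarrow> m < n \<Longrightarrow> veq n (rl m # x_word k l @ [rl m]) (x_word (sw m k) (sw m l))"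
  unfolding x_gens_def using conj_lt[of k l n m] conj_gt[of l k n m] by (cases "k < l") auto

lemma no_desc:
  "distinct t \<Longrightarrow> \<forall>x\<in>set t. 1 \<le> x \<Longrightarrow> (\<forall>a xs ys. 1 \<le> a \<longrightarrow> t = xs @ (a+1) # ys \<longrightarrow> a \<in> set xs)
   \<Longrightarrow> t = [1..<length t + 1]"
proof (induction t rule: rev_induct)
  case Nil then show ?case by simp
next
  case (snoc x t0)
  have h0: "\<forall>a xs ys. 1 \<le> a \<longrightarrow> t0 = xs @ (a+1) # ys \<longrightarrow> a \<in> set xs"
  proof (intro allI impI)
    fix a xs ys assume "1 \<le> a" "t0 = xs @ (a+1) # ys"
    then show "a \<in> set xs" using snoc.prems(3)[rule_format, of a xs "ys @ [x]"] by simp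
  qed
  define k where "k = length t0"
  have t0: "t0 = [1..<k + 1]" unfolding k_def by (rule snoc.IH) (use snoc.prems h0 in auto)
  have st: "set t0 = {1..k}" by (subst t0) auto
  have x: "x \<notin> set t0" "1 \<le> x" using snoc by auto
  have "x = k + 1"
  proof (cases "x = 1")
    case True then show ?thesis using x st by (cases "k = 0") auto
  next
    case False
    then have "x - 1 \<in> set t0" using snoc.prems(3)[rule_format, of "x - 1" t0 "[]"] x by simp
    then show ?thesis using x st by auto
  qed
  then have e1: "t0 @ [x] = [1..<k+1] @ [k+1]" by (subst t0) simp
  have e2: "length (t0 @ [x]) = k + 1" by (simp add: k_def)
  show ?case unfolding e2 e1 by simp
qed

lemma sw_range: "1 \<le> a \<Longrightarrow> a < n \<Longrightarrow> x \<in> {1..n} \<Longrightarrow> sw a x \<in> {1..n}"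
  by (auto simp: sw_def)

lemma reach:
  fixes Q :: "nat list \<Rightarrow> bool"
  assumes base: "Q [1..<r+1]"
    and step: "\<And>t m. Q t \<Longrightarrow> 1 \<le> m \<Longrightarrow> m < n \<Longrightarrow> distinct t \<Longrightarrow> set t \<subseteq> {1..n} \<Longrightarrow> length t = r \<Longrightarrow> Q (map (sw m) t)"
  shows "distinct t \<Longrightarrow> set t \<subseteq> {1..n} \<Longrightarrow> length t = r \<Longrightarrow> Q t"
proof (induction t rule: wf_induct[OF wf_lex[OF wf_less_than]])
  case (1 t)
  show ?case
  proof (cases "t = [1..<r+1]")
    case True then show ?thesis using base by simp
  next
    case False
    have "\<not> (\<forall>a xs ys. 1 \<le> a \<longrightarrow> t = xs @ (a+1) # ys \<longrightarrow> a \<in> set xs)"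
    proof
      assume h: "\<forall>a xs ys. 1 \<le> a \<longrightarrow> t = xs @ (a+1) # ys \<longrightarrow> a \<in> set xs"
      have "t = [1..<length t + 1]" by (rule no_desc) (use 1 h in auto)
      then show False using False 1(4) by simp
    qed
    then obtain a xs ys where a: "1 \<le> a" "t = xs @ (a+1) # ys" "a \<notin> set xs" by blast
    have a1: "a + 1 \<notin> set xs" using 1(2) a by auto
    have an: "a < n" using 1(3) a by auto
    have mx: "map (sw a) xs = xs" using a(3) a1 by (auto simp: sw_def intro!: map_idI)
    define t' where "t' = map (sw a) t"
    have t': "t' = xs @ a # map (sw a) ys" using a mx by (simp add: t'_def sw_def)
    have lex: "(t', t) \<in> lex less_than" unfolding t' a(2) by (intro lex_append_leftI) simp
    have d: "distinct t'" using 1(2) by (simp add: t'_def distinct_map inj_on_def sw_inj)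
    have s: "set t' \<subseteq> {1..n}" using 1(3) sw_range[OF a(1) an] by (force simp: t'_def)
    have "Q t'" using 1(1) lex d s 1(4) by (simp add: t'_def)
    then have "Q (map (sw a) t')" using step[of t' a] a an d s 1(4) by (simp add: t'_def)
    then show ?thesis by (simp add: t'_def comp_def)
  qed
qed

abbreviation cj :: "nat \<Rightarrow> vb_gen word \<Rightarrow> vb_gen word" where "cj m w \<equiv> rl m # w @ [rl m]"

lemma cj_app: "1 \<le> m \<Longrightarrow> m < n \<Longrightarrow> veq n (cj m u @ cj m v) (cj m (u @ v))"
  by (rule vstep[OF R_rr, where p="rl m # u" and q="v @ [rl m]"]) simp_all

lemma cj_cong: "veq n u v \<Longrightarrow> veq n (cj m u) (cj m v)"
  using vsub[of n u v "[rl m]" "[rl m]"] by simp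

lemma transport2:
  assumes m: "1 \<le> m" "m < n" and U0: "veq n U1 (cj m U0)" and V0: "veq n V1 (cj m V0)"
    and e: "veq n (U0 @ V0) (V0 @ U0)"
  shows "veq n (U1 @ V1) (V1 @ U1)"
proof -
  have "veq n (U1 @ V1) (cj m U0 @ cj m V0)" using U0 V0 by (rule pres_eq.congr)
  also have "veq n \<dots> (cj m (U0 @ V0))" by (rule cj_app[OF m])
  also have "veq n \<dots> (cj m (V0 @ U0))" by (rule cj_cong[OF e])
  also have "veq n \<dots> (cj m V0 @ cj m U0)" by (rule vsym, rule cj_app[OF m])
  also have "veq n \<dots> (V1 @ U1)" by (rule pres_eq.congr[OF vsym[OF V0] vsym[OF U0]])
  finally show ?thesis .
qed

lemma transport3:
  assumes m: "1 \<le> m" "m < n" and U0: "veq n U1 (cj m U0)" and V0: "veq n V1 (cj m V0)"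
    and e: "veq n (U0 @ V0 @ U0) (V0 @ U0 @ V0)"
  shows "veq n (U1 @ V1 @ U1) (V1 @ U1 @ V1)"
proof -
  have "veq n (U1 @ V1 @ U1) (cj m U0 @ cj m V0 @ cj m U0)" by (rule pres_eq.congr[OF U0 pres_eq.congr[OF V0 U0]])
  also have "veq n \<dots> (cj m U0 @ cj m (V0 @ U0))" by (rule pres_eq.congr[OF vref cj_app[OF m]])
  also have "veq n \<dots> (cj m (U0 @ V0 @ U0))" using cj_app[OF m, of U0 "V0 @ U0"] by simp
  also have "veq n \<dots> (cj m (V0 @ U0 @ V0))" by (rule cj_cong[OF e])
  also have "veq n \<dots> (cj m V0 @ cj m (U0 @ V0))" using cj_app[OF m, of V0 "U0 @ V0"] by (simp add: vsym)
  also have "veq n \<dots> (cj m V0 @ cj m U0 @ cj m V0)" by (rule pres_eq.congr[OF vref vsym[OF cj_app[OF m]]])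
  also have "veq n \<dots> (V1 @ U1 @ V1)" by (rule pres_eq.congr[OF vsym[OF V0] pres_eq.congr[OF vsym[OF U0] vsym[OF V0]]])
  finally show ?thesis .
qed

lemma xg_sw: "(i, j) \<in> x_gens n \<Longrightarrow> 1 \<le> m \<Longrightarrow> m < n \<Longrightarrow> (sw m i, sw m j) \<in> x_gens n"
  by (auto simp: x_gens_def sw_def)

lemma rel_comm:
  assumes "(i, j) \<in> x_gens n" "(k, l) \<in> x_gens n" "distinct [i, j, k, l]"
  shows "veq n (x_word i j @ x_word k l) (x_word k l @ x_word i j)"
proof -
  define Q where "Q t = veq n (x_word (t!0) (t!1) @ x_word (t!2) (t!3)) (x_word (t!2) (t!3) @ x_word (t!0) (t!1))" for t
  have sub: "set [i, j, k, l] \<subseteq> {1..n}" using assms by (auto simp: x_gens_def)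
  have "card (set [i, j, k, l]) \<le> card {1..n}" by (rule card_mono[OF _ sub]) simp
  then have n4: "4 \<le> n" using assms(3) distinct_card[OF assms(3)] by simp
  have "Q [i, j, k, l]"
  proof (rule reach[where r=4 and n=n])
    have e: "[1..<4+1] = [1,2,3,4::nat]" by (simp add: upt_rec)
    show "Q [1..<4+1]" unfolding Q_def e using R_ss_comm[of 1 n 3] n4
      by (simp add: x_word_def g_def)
  next
    fix t m assume q: "Q t" and m: "1 \<le> m" "m < n" and t: "distinct t" "set t \<subseteq> {1..n}" "length t = 4"
    obtain a b c d where tt: "t = [a, b, c, d]" using t(3) by (auto simp: length_Suc_conv numeral_eq_Suc)
    have g: "(a, b) \<in> x_gens n" "(c, d) \<in> x_gens n" using t by (auto simp: tt x_gens_def)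
    have e: "veq n (x_word a b @ x_word c d) (x_word c d @ x_word a b)" using q by (simp add: Q_def tt)
    show "Q (map (sw m) t)" unfolding Q_def tt
      using transport2[OF m vsym[OF conj_x[OF g(1) m]] vsym[OF conj_x[OF g(2) m]] e] by simp
  qed (use assms sub in auto)
  then show ?thesis by (simp add: Q_def)
qed

lemma rel_braid:
  assumes "(i, k) \<in> x_gens n" "(k, j) \<in> x_gens n" "distinct [i, j, k]"
  shows "veq n (x_word i k @ x_word k j @ x_word i k) (x_word k j @ x_word i k @ x_word k j)"
proof -
  define Q where "Q t = veq n (x_word (t!0) (t!1) @ x_word (t!1) (t!2) @ x_word (t!0) (t!1))
     (x_word (t!1) (t!2) @ x_word (t!0) (t!1) @ x_word (t!1) (t!2))" for t
  have sub: "set [i, k, j] \<subseteq> {1..n}" using assms by (auto simp: x_gens_def)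
  have d: "distinct [i, k, j]" using assms(3) by auto
  have "card (set [i, k, j]) \<le> card {1..n}" by (rule card_mono[OF _ sub]) simp
  then have n3: "3 \<le> n" using distinct_card[OF d] by simp
  have "Q [i, k, j]"
  proof (rule reach[where r=3 and n=n])
    have e: "[1..<3+1] = [1,2,3::nat]" by (simp add: upt_rec)
    show "Q [1..<3+1]" unfolding Q_def e using R_ss_braid[of 1 n] n3
      by (simp add: x_word_def g_def numeral_2_eq_2)
  next
    fix t m assume q: "Q t" and m: "1 \<le> m" "m < n" and t: "distinct t" "set t \<subseteq> {1..n}" "length t = 3"
    obtain a b c where tt: "t = [a, b, c]" using t(3) by (auto simp: length_Suc_conv numeral_eq_Suc)
    have g: "(a, b) \<in> x_gens n" "(b, c) \<in> x_gens n" using t by (auto simp: tt x_gens_def)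
    have e: "veq n (x_word a b @ x_word b c @ x_word a b) (x_word b c @ x_word a b @ x_word b c)" using q by (simp add: Q_def tt)
    show "Q (map (sw m) t)" unfolding Q_def tt
      using transport3[OF m vsym[OF conj_x[OF g(1) m]] vsym[OF conj_x[OF g(2) m]] e] by simp
  qed (use d sub in auto)
  then show ?thesis by (simp add: Q_def)
qed

lemma xpres: "presg (x_gens n) (x_rels n)"
  unfolding presg_def x_rels_def by (auto simp: xg_def words_def)
lemma vb_gens_iff[simp]: "Sig j \<in> vb_gens n \<longleftrightarrow> 1 \<le> j \<and> j < n" "Rho j \<in> vb_gens n \<longleftrightarrow> 1 \<le> j \<and> j < n"
  by (auto simp: vb_gens_def)

lemma vpres: "presg (vb_gens n) (vb_rels n)"
  unfolding presg_def vb_rels_def by (auto simp: g_def)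

lemma words_map: "w \<in> words S \<Longrightarrow> h \<in> S \<rightarrow> S' \<Longrightarrow> map (apfst h) w \<in> words S'"
  by (induction w) (auto simp: Pi_iff)

lemma ev_map: "ev G f (map (apfst h) w) = ev G (f \<circ> h) w"
  by (induction w) auto

lemma (in presg) ev_gen_map:
  assumes w: "w \<in> words S" and h: "h \<in> S \<rightarrow> S"
  shows "ev PG (gen_elem S R \<circ> h) w = cls (map (apfst h) w)"
proof -
  have "map (apfst h) w \<in> words S" using w h by (rule words_map)
  then show ?thesis using cls_ev ev_map by metis
qed

lemma (in presg) relabel:
  assumes h: "h \<in> S \<rightarrow> S" and r: "\<And>l r. (l, r) \<in> R \<Longrightarrow> (map (apfst h) l, map (apfst h) r) \<in> R"
  shows "lift PG (gen_elem S R \<circ> h) \<in> hom PG PG"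
    and "w \<in> words S \<Longrightarrow> lift PG (gen_elem S R \<circ> h) (cls w) = cls (map (apfst h) w)"
proof -
  have f: "gen_elem S R \<circ> h \<in> S \<rightarrow> carrier PG" using h by (auto simp: gen_cls Pi_iff intro!: cls_in)
  have rels: "ev PG (gen_elem S R \<circ> h) l = ev PG (gen_elem S R \<circ> h) r" if lr: "(l, r) \<in> R" for l r
  proof -
    have w: "l \<in> words S" "r \<in> words S" using lr R_words by auto
    have w': "map (apfst h) l \<in> words S" "map (apfst h) r \<in> words S" using w h by (auto intro: words_map)
    have "ev PG (gen_elem S R \<circ> h) l = cls (map (apfst h) l)" by (rule ev_gen_map[OF w(1) h])
    also have "\<dots> = cls (map (apfst h) r)" using cls_eq[OF w'] pres_eq.rel[OF r[OF lr]] by simp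
    also have "\<dots> = ev PG (gen_elem S R \<circ> h) r" by (rule ev_gen_map[OF w(2) h, symmetric])
    finally show ?thesis .
  qed
  show "lift PG (gen_elem S R \<circ> h) \<in> hom PG PG" by (rule lift_hom[OF group_PG f rels])
  show "w \<in> words S \<Longrightarrow> lift PG (gen_elem S R \<circ> h) (cls w) = cls (map (apfst h) w)"
    using lift_cls[OF group_PG f rels] ev_gen_map[OF _ h] by simp
qed

abbreviation cP :: "nat \<Rightarrow> (nat \<times> nat) word \<Rightarrow> (nat \<times> nat) word set" where
  "cP n w \<equiv> pres_rel (x_gens n) (x_rels n) `` {w}"

definition hp :: "(nat \<Rightarrow> nat) \<Rightarrow> nat \<times> nat \<Rightarrow> nat \<times> nat" where "hp \<pi> = (\<lambda>(k, l). (\<pi> k, \<pi> l))"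

definition alpha :: "nat \<Rightarrow> (nat \<Rightarrow> nat) \<Rightarrow> (nat \<times> nat) word set \<Rightarrow> (nat \<times> nat) word set" where
  "alpha n \<pi> = lift (P n) (gen_elem (x_gens n) (x_rels n) \<circ> hp \<pi>)"

lemma group_P: "group (P n)" unfolding P_def by (rule presg.group_PG[OF xpres])
lemma group_VB: "group (VB n)" unfolding VB_def by (rule presg.group_PG[OF vpres])

lemma hp_gens: assumes p: "\<pi> permutes {1..n}" shows "hp \<pi> \<in> x_gens n \<rightarrow> x_gens n"
proof
  fix x assume "x \<in> x_gens n"
  then obtain k l where x: "x = (k, l)" "k \<in> {1..n}" "l \<in> {1..n}" "k \<noteq> l" by (auto simp: x_gens_def)
  have "\<pi> k \<in> {1..n}" "\<pi> l \<in> {1..n}" using x permutes_in_image[OF p] by blast+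
  moreover have "\<pi> k \<noteq> \<pi> l" using x permutes_inj[OF p] by (auto dest: injD)
  ultimately show "hp \<pi> x \<in> x_gens n" using x by (simp add: hp_def x_gens_def)
qed

lemma map_xg: "map (apfst (hp \<pi>)) (xg i j) = xg (\<pi> i) (\<pi> j)" by (simp add: xg_def hp_def)

lemma hp_rels:
  assumes p: "\<pi> permutes {1..n}" and lr: "(l, r) \<in> x_rels n"
  shows "(map (apfst (hp \<pi>)) l, map (apfst (hp \<pi>)) r) \<in> x_rels n"
proof -
  have inj: "inj \<pi>" using p by (rule permutes_inj)
  have g: "\<And>k l. (k, l) \<in> x_gens n \<Longrightarrow> (\<pi> k, \<pi> l) \<in> x_gens n"
  proof -
    fix k l assume "(k, l) \<in> x_gens n"
    then have "hp \<pi> (k, l) \<in> x_gens n" using hp_gens[OF p] by blast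
    then show "(\<pi> k, \<pi> l) \<in> x_gens n" by (simp add: hp_def)
  qed
  have d: "\<And>xs. distinct xs \<Longrightarrow> distinct (map \<pi> xs)"
    using inj_on_subset[OF inj subset_UNIV] distinct_map by blast
  show ?thesis using lr unfolding x_rels_def
  proof (elim UnE CollectE exE conjE)
    fix i j k l' assume e: "(l, r) = (xg i j @ xg k l', xg k l' @ xg i j)" and h: "(i, j) \<in> x_gens n" "(k, l') \<in> x_gens n" "distinct [i, j, k, l']"
    show "(map (apfst (hp \<pi>)) l, map (apfst (hp \<pi>)) r)
      \<in> {(xg i j @ xg k l, xg k l @ xg i j) |i j k l. (i, j) \<in> x_gens n \<and> (k, l) \<in> x_gens n \<and> distinct [i, j, k, l]} \<union>
         {(xg i k @ xg k j @ xg i k, xg k j @ xg i k @ xg k j) |i j k. (i, k) \<in> x_gens n \<and> (k, j) \<in> x_gens n \<and> distinct [i, j, k]}"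
    proof (rule UnI1)
      have A: "map (apfst (hp \<pi>)) l = xg (\<pi> i) (\<pi> j) @ xg (\<pi> k) (\<pi> l')"
       and B: "map (apfst (hp \<pi>)) r = xg (\<pi> k) (\<pi> l') @ xg (\<pi> i) (\<pi> j)" using e by (simp_all add: map_xg)
      show "(map (apfst (hp \<pi>)) l, map (apfst (hp \<pi>)) r)
      \<in> {(xg i j @ xg k l, xg k l @ xg i j) |i j k l. (i, j) \<in> x_gens n \<and> (k, l) \<in> x_gens n \<and> distinct [i, j, k, l]}"
        unfolding A B using g[OF h(1)] g[OF h(2)] d[OF h(3)] by auto
    qed
  next
    fix i j k assume e: "(l, r) = (xg i k @ xg k j @ xg i k, xg k j @ xg i k @ xg k j)" and h: "(i, k) \<in> x_gens n" "(k, j) \<in> x_gens n" "distinct [i, j, k]"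
    show "(map (apfst (hp \<pi>)) l, map (apfst (hp \<pi>)) r)
      \<in> {(xg i j @ xg k l, xg k l @ xg i j) |i j k l. (i, j) \<in> x_gens n \<and> (k, l) \<in> x_gens n \<and> distinct [i, j, k, l]} \<union>
         {(xg i k @ xg k j @ xg i k, xg k j @ xg i k @ xg k j) |i j k. (i, k) \<in> x_gens n \<and> (k, j) \<in> x_gens n \<and> distinct [i, j, k]}"
    proof (rule UnI2)
      have A: "map (apfst (hp \<pi>)) l = xg (\<pi> i) (\<pi> k) @ xg (\<pi> k) (\<pi> j) @ xg (\<pi> i) (\<pi> k)"
       and B: "map (apfst (hp \<pi>)) r = xg (\<pi> k) (\<pi> j) @ xg (\<pi> i) (\<pi> k) @ xg (\<pi> k) (\<pi> j)" using e by (simp_all add: map_xg)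
      show "(map (apfst (hp \<pi>)) l, map (apfst (hp \<pi>)) r)
      \<in> {(xg i k @ xg k j @ xg i k, xg k j @ xg i k @ xg k j) |i j k. (i, k) \<in> x_gens n \<and> (k, j) \<in> x_gens n \<and> distinct [i, j, k]}"
        unfolding A B using g[OF h(1)] g[OF h(2)] d[OF h(3)] by auto
    qed
  qed
qed

lemma alpha_hom: "\<pi> permutes {1..n} \<Longrightarrow> alpha n \<pi> \<in> hom (P n) (P n)"
  unfolding alpha_def P_def by (rule presg.relabel(1)[OF xpres hp_gens hp_rels])

lemma alpha_cls: "\<pi> permutes {1..n} \<Longrightarrow> w \<in> words (x_gens n) \<Longrightarrow> alpha n \<pi> (cP n w) = cP n (map (apfst (hp \<pi>)) w)"
  unfolding alpha_def P_def by (rule presg.relabel(2)[OF xpres hp_gens hp_rels])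

lemma carrier_P: "carrier (P n) = cP n ` words (x_gens n)"
  unfolding P_def by (rule presg.carrier_PG[OF xpres])

lemma alpha_comp: "\<pi> permutes {1..n} \<Longrightarrow> \<sigma> permutes {1..n} \<Longrightarrow> p \<in> carrier (P n) \<Longrightarrow>
   alpha n \<pi> (alpha n \<sigma> p) = alpha n (\<pi> \<circ> \<sigma>) p"
proof -
  assume a: "\<pi> permutes {1..n}" "\<sigma> permutes {1..n}" "p \<in> carrier (P n)"
  then obtain w where w: "w \<in> words (x_gens n)" "p = cP n w" by (auto simp: carrier_P)
  have w': "map (apfst (hp \<sigma>)) w \<in> words (x_gens n)" using w hp_gens[OF a(2)] by (auto intro: words_map)
  have e: "apfst (hp \<pi>) \<circ> apfst (hp \<sigma>) = apfst (hp (\<pi> \<circ> \<sigma>))"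
    by (auto simp: hp_def fun_eq_iff)
  have m: "map (apfst (hp \<pi>)) (map (apfst (hp \<sigma>)) w) = map (apfst (hp (\<pi> \<circ> \<sigma>))) w"
    by (simp only: map_map e)
  show ?thesis using w w' a by (simp add: alpha_cls permutes_compose m del: map_map)
qed

lemma alpha_id: "p \<in> carrier (P n) \<Longrightarrow> alpha n id p = p"
proof -
  assume "p \<in> carrier (P n)"
  then obtain w where w: "w \<in> words (x_gens n)" "p = cP n w" by (auto simp: carrier_P)
  have "map (apfst (hp id)) w = w" by (induction w) (auto simp: hp_def)
  then show ?thesis using w by (simp add: alpha_cls)
qed

definition SD :: "nat \<Rightarrow> ((nat \<times> nat) word set \<times> (nat \<Rightarrow> nat)) monoid" where
  "SD n = \<lparr>carrier = carrier (P n) \<times> {\<pi>. \<pi> permutes {1..n}},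
     monoid.mult = (\<lambda>x y. (fst x \<otimes>\<^bsub>P n\<^esub> alpha n (snd x) (fst y), snd x \<circ> snd y)),
     one = (\<one>\<^bsub>P n\<^esub>, id)\<rparr>"

lemma SD_simps: "carrier (SD n) = carrier (P n) \<times> {\<pi>. \<pi> permutes {1..n}}"
  "x \<otimes>\<^bsub>SD n\<^esub> y = (fst x \<otimes>\<^bsub>P n\<^esub> alpha n (snd x) (fst y), snd x \<circ> snd y)"
  "\<one>\<^bsub>SD n\<^esub> = (\<one>\<^bsub>P n\<^esub>, id)"
  by (simp_all add: SD_def)

lemma group_SD: "group (SD n)"
proof -
  interpret Pn: group "P n" by (rule group_P)
  have hc: "\<And>\<pi> q. \<pi> permutes {1..n} \<Longrightarrow> q \<in> carrier (P n) \<Longrightarrow> alpha n \<pi> q \<in> carrier (P n)"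
    using alpha_hom by (auto simp: hom_def)
  have hm: "\<And>\<pi> q r. \<pi> permutes {1..n} \<Longrightarrow> q \<in> carrier (P n) \<Longrightarrow> r \<in> carrier (P n) \<Longrightarrow>
      alpha n \<pi> (q \<otimes>\<^bsub>P n\<^esub> r) = alpha n \<pi> q \<otimes>\<^bsub>P n\<^esub> alpha n \<pi> r"
    using alpha_hom by (auto simp: hom_def)
  have h1: "\<And>\<pi>. \<pi> permutes {1..n} \<Longrightarrow> alpha n \<pi> \<one>\<^bsub>P n\<^esub> = \<one>\<^bsub>P n\<^esub>"
    using alpha_hom group_hom.hom_one group_hom.intro group_hom_axioms.intro group_P by metis
  show ?thesis
  proof (rule groupI)
    fix x y assume "x \<in> carrier (SD n)" "y \<in> carrier (SD n)"
    then show "x \<otimes>\<^bsub>SD n\<^esub> y \<in> carrier (SD n)" by (auto simp: SD_simps hc permutes_compose)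
  next
    show "\<one>\<^bsub>SD n\<^esub> \<in> carrier (SD n)" by (simp add: SD_simps)
  next
    fix x y z assume "x \<in> carrier (SD n)" "y \<in> carrier (SD n)" "z \<in> carrier (SD n)"
    then obtain p1 p2 p3 s1 s2 s3 where e: "x = (p1, s1)" "y = (p2, s2)" "z = (p3, s3)"
      and c: "p1 \<in> carrier (P n)" "p2 \<in> carrier (P n)" "p3 \<in> carrier (P n)"
      and s: "s1 permutes {1..n}" "s2 permutes {1..n}" "s3 permutes {1..n}" by (auto simp: SD_simps)
    have "alpha n (s1 \<circ> s2) p3 = alpha n s1 (alpha n s2 p3)" using alpha_comp s c by simp
    then show "x \<otimes>\<^bsub>SD n\<^esub> y \<otimes>\<^bsub>SD n\<^esub> z = x \<otimes>\<^bsub>SD n\<^esub> (y \<otimes>\<^bsub>SD n\<^esub> z)"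
      using c s by (simp add: e SD_simps hc hm Pn.m_assoc comp_assoc)
  next
    fix x assume "x \<in> carrier (SD n)"
    then show "\<one>\<^bsub>SD n\<^esub> \<otimes>\<^bsub>SD n\<^esub> x = x" by (auto simp: SD_simps alpha_id)
  next
    fix x assume x: "x \<in> carrier (SD n)"
    then obtain p \<pi> where p: "x = (p, \<pi>)" "p \<in> carrier (P n)" "\<pi> permutes {1..n}" by (auto simp: SD_simps)
    have ip: "inv_into UNIV \<pi> permutes {1..n}" using p(3) by (rule permutes_inv)
    have "(alpha n (inv_into UNIV \<pi>) (inv\<^bsub>P n\<^esub> p), inv_into UNIV \<pi>) \<otimes>\<^bsub>SD n\<^esub> x = \<one>\<^bsub>SD n\<^esub>"
      using p ip by (simp add: SD_simps hm[symmetric] h1 permutes_inv_o(2))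
    moreover have "(alpha n (inv_into UNIV \<pi>) (inv\<^bsub>P n\<^esub> p), inv_into UNIV \<pi>) \<in> carrier (SD n)"
      using p ip by (simp add: SD_simps hc)
    ultimately show "\<exists>y\<in>carrier (SD n). y \<otimes>\<^bsub>SD n\<^esub> x = \<one>\<^bsub>SD n\<^esub>" by blast
  qed
qed

abbreviation cV :: "nat \<Rightarrow> vb_gen word \<Rightarrow> vb_gen word set" where
  "cV n w \<equiv> pres_rel (vb_gens n) (vb_rels n) `` {w}"

lemma sw_perm: "1 \<le> i \<Longrightarrow> i < n \<Longrightarrow> sw i permutes {1..n}"
proof -
  assume "1 \<le> i" "i < n"
  moreover have "sw i = transpose i (i+1)" by (simp add: fun_eq_iff sw_def transpose_def)
  ultimately show ?thesis by (simp add: permutes_swap_id)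
qed

lemma P_mult: "u \<in> words (x_gens n) \<Longrightarrow> v \<in> words (x_gens n) \<Longrightarrow> cP n u \<otimes>\<^bsub>P n\<^esub> cP n v = cP n (u @ v)"
  unfolding P_def by (rule presg.mult_cls[OF xpres])
lemma P_one: "\<one>\<^bsub>P n\<^esub> = cP n []"
  unfolding P_def by (rule presg.one_PG[OF xpres])
lemma P_in: "u \<in> words (x_gens n) \<Longrightarrow> cP n u \<in> carrier (P n)"
  unfolding P_def by (rule presg.cls_in[OF xpres])
lemma P_rel: "(l, r) \<in> x_rels n \<Longrightarrow> cP n l = cP n r"
proof -
  assume lr: "(l, r) \<in> x_rels n"
  then have "l \<in> words (x_gens n)" "r \<in> words (x_gens n)" using presg.R_words[OF xpres] by auto
  then show ?thesis using presg.cls_eq[OF xpres] pres_eq.rel[OF lr] by blast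
qed

lemma alpha_gen: "\<pi> permutes {1..n} \<Longrightarrow> (k, l) \<in> x_gens n \<Longrightarrow> alpha n \<pi> (cP n [((k, l), False)]) = cP n [((\<pi> k, \<pi> l), False)]"
  by (simp add: alpha_cls hp_def)
lemma alpha_id_cls: "w \<in> words (x_gens n) \<Longrightarrow> alpha n id (cP n w) = cP n w"
  by (simp add: alpha_id P_in)
lemma alpha_one: "\<pi> permutes {1..n} \<Longrightarrow> alpha n \<pi> (cP n []) = cP n []"
  by (simp add: alpha_cls)

definition fPhi :: "nat \<Rightarrow> vb_gen \<Rightarrow> (nat \<times> nat) word set \<times> (nat \<Rightarrow> nat)" where
  "fPhi n a = (case a of Sig i \<Rightarrow> (cP n [((i, i+1), False)], id) | Rho i \<Rightarrow> (cP n [], sw i))"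

lemma fPhi_simps[simp]: "fPhi n (Sig i) = (cP n [((i, i+1), False)], id)" "fPhi n (Rho i) = (cP n [], sw i)"
  by (simp_all add: fPhi_def)

lemma xg_in: "1 \<le> i \<Longrightarrow> i < n \<Longrightarrow> (i, Suc i) \<in> x_gens n" by (simp add: x_gens_def)

lemma x_rels_comm: "(i, j) \<in> x_gens n \<Longrightarrow> (k, l) \<in> x_gens n \<Longrightarrow> distinct [i, j, k, l] \<Longrightarrow>
  (xg i j @ xg k l, xg k l @ xg i j) \<in> x_rels n"
  unfolding x_rels_def by blast
lemma x_rels_braid: "(i, k) \<in> x_gens n \<Longrightarrow> (k, j) \<in> x_gens n \<Longrightarrow> distinct [i, j, k] \<Longrightarrow>
  (xg i k @ xg k j @ xg i k, xg k j @ xg i k @ xg k j) \<in> x_rels n"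
  unfolding x_rels_def by blast

lemma fPhi_in: "fPhi n \<in> vb_gens n \<rightarrow> carrier (SD n)"
proof
  fix a assume a: "a \<in> vb_gens n"
  show "fPhi n a \<in> carrier (SD n)"
  proof (cases a)
    case (Sig i)
    then have "[((i, i+1), False)] \<in> words (x_gens n)" using a by (simp add: xg_in)
    then show ?thesis using Sig by (simp add: SD_simps P_in)
  next
    case (Rho i) then show ?thesis using a sw_perm[of i n] by (auto simp: SD_simps intro!: P_in)
  qed
qed


lemma Phi_rels:
  assumes lr: "(l, r) \<in> vb_rels n"
  shows "ev (SD n) (fPhi n) l = ev (SD n) (fPhi n) r"
  using lr unfolding vb_rels_def
proof (elim UnE CollectE exE conjE)
  fix i assume e: "(l, r) = (g (Sig i) @ g (Sig (i+1)) @ g (Sig i), g (Sig (i+1)) @ g (Sig i) @ g (Sig (i+1)))"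
    and i: "1 \<le> i" "i \<le> n - 2"
  have "(xg i (i+1) @ xg (i+1) (i+2) @ xg i (i+1), xg (i+1) (i+2) @ xg i (i+1) @ xg (i+1) (i+2)) \<in> x_rels n"
    using i by (intro x_rels_braid) (auto simp: x_gens_def)
  then have "cP n (xg i (i+1) @ xg (i+1) (i+2) @ xg i (i+1)) = cP n (xg (i+1) (i+2) @ xg i (i+1) @ xg (i+1) (i+2))"
    by (rule P_rel)
  then show ?thesis using e i by (simp add: g_def SD_simps alpha_gen alpha_one alpha_id_cls xg_in P_mult P_one xg_def)
next
  fix i j assume e: "(l, r) = (g (Sig i) @ g (Sig j), g (Sig j) @ g (Sig i))"
    and i: "1 \<le> i" "i \<le> n - 1" "1 \<le> j" "j \<le> n - 1" "j + 2 \<le> i \<or> i + 2 \<le> j"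
  have "(xg i (i+1) @ xg j (j+1), xg j (j+1) @ xg i (i+1)) \<in> x_rels n"
    using i by (intro x_rels_comm) (auto simp: x_gens_def)
  then have "cP n (xg i (i+1) @ xg j (j+1)) = cP n (xg j (j+1) @ xg i (i+1))" by (rule P_rel)
  then show ?thesis using e i by (simp add: g_def SD_simps alpha_gen alpha_one alpha_id_cls xg_in P_mult P_one xg_def)
next
  fix i assume e: "(l, r) = (g (Rho i) @ g (Rho (i+1)) @ g (Rho i), g (Rho (i+1)) @ g (Rho i) @ g (Rho (i+1)))"
    and i: "1 \<le> i" "i \<le> n - 2"
  have "sw i \<circ> (sw (i+1) \<circ> sw i) = sw (i+1) \<circ> (sw i \<circ> sw (i+1))" by (auto simp: fun_eq_iff sw_def)
  moreover have "sw i permutes {1..n}" by (rule sw_perm) (use i in auto)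
  moreover have "sw (i+1) permutes {1..n}" by (rule sw_perm) (use i in auto)
  ultimately show ?thesis using e i by (simp add: g_def SD_simps alpha_one P_mult P_one)
next
  fix i j assume e: "(l, r) = (g (Rho i) @ g (Rho j), g (Rho j) @ g (Rho i))"
    and i: "1 \<le> i" "i \<le> n - 1" "1 \<le> j" "j \<le> n - 1" "j + 2 \<le> i \<or> i + 2 \<le> j"
  have "sw i \<circ> sw j = sw j \<circ> sw i" using i(5) by (auto simp: fun_eq_iff sw_def)
  moreover have "sw i permutes {1..n}" by (rule sw_perm) (use i in auto)
  moreover have "sw j permutes {1..n}" by (rule sw_perm) (use i in auto)
  ultimately show ?thesis using e i by (simp add: g_def SD_simps alpha_one P_mult P_one)
next
  fix i assume e: "(l, r) = (g (Rho i) @ g (Rho i), [])" and i: "1 \<le> i" "i \<le> n - 1"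
  have "sw i \<circ> sw i = id" by (auto simp: fun_eq_iff)
  moreover have "sw i permutes {1..n}" by (rule sw_perm) (use i in auto)
  ultimately show ?thesis using e i by (simp add: g_def SD_simps alpha_one P_mult P_one)
next
  fix i j assume e: "(l, r) = (g (Sig i) @ g (Rho j), g (Rho j) @ g (Sig i))"
    and i: "1 \<le> i" "i \<le> n - 1" "1 \<le> j" "j \<le> n - 1" "j + 2 \<le> i \<or> i + 2 \<le> j"
  have s: "sw j i = i" "sw j (i+1) = i+1" using i(5) by (auto simp: sw_def)
  have p: "sw j permutes {1..n}" by (rule sw_perm) (use i in auto)
  have a: "alpha n (sw j) (cP n [((i, i+1), False)]) = cP n [((i, i+1), False)]"
  proof -
    have "(i, i+1) \<in> x_gens n" using i by (auto simp: x_gens_def)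
    then show ?thesis using alpha_gen[OF p, of i "i+1"] s by simp
  qed
  have w: "[((i, i+1), False)] \<in> words (x_gens n)" using i by (auto simp: x_gens_def)
  show ?thesis using e i a p w by (simp add: g_def SD_simps alpha_one alpha_id_cls P_mult P_one)
next
  fix i assume e: "(l, r) = (g (Rho i) @ g (Rho (i+1)) @ g (Sig i), g (Sig (i+1)) @ g (Rho i) @ g (Rho (i+1)))"
    and i: "1 \<le> i" "i \<le> n - 2"
  have p: "sw i permutes {1..n}" "sw (i+1) permutes {1..n}" by (rule sw_perm; use i in auto)+
  have a: "alpha n (sw (i+1)) (cP n [((i, i+1), False)]) = cP n [((i, i+2), False)]"
  proof -
    have "(i, i+1) \<in> x_gens n" using i by (auto simp: x_gens_def)
    then show ?thesis using alpha_gen[OF p(2), of i "i+1"] by (simp add: sw_def)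
  qed
  have b: "alpha n (sw i) (cP n [((i, i+2), False)]) = cP n [((i+1, i+2), False)]"
  proof -
    have "(i, i+2) \<in> x_gens n" using i by (auto simp: x_gens_def)
    then show ?thesis using alpha_gen[OF p(1), of i "i+2"] by (simp add: sw_def)
  qed
  have c: "alpha n (sw i) (cP n []) = cP n []" "alpha n (sw (i+1)) (cP n []) = cP n []" by (rule alpha_one[OF p(1)], rule alpha_one[OF p(2)])
  have w: "[((i, i+2), False)] \<in> words (x_gens n)" "[((i+1, i+2), False)] \<in> words (x_gens n)" "[((i, i+1), False)] \<in> words (x_gens n)"
    using i by (auto simp: x_gens_def)
  show ?thesis using e i a b c w by (simp add: g_def SD_simps alpha_id_cls P_mult P_one)
qed

lemma sw_o_sw: "sw m \<circ> sw m = id" by (auto simp: fun_eq_iff)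

lemma V_mult: "u \<in> words (vb_gens n) \<Longrightarrow> v \<in> words (vb_gens n) \<Longrightarrow> cV n u \<otimes>\<^bsub>VB n\<^esub> cV n v = cV n (u @ v)"
  unfolding VB_def by (rule presg.mult_cls[OF vpres])
lemma V_one: "\<one>\<^bsub>VB n\<^esub> = cV n []"
  unfolding VB_def by (rule presg.one_PG[OF vpres])
lemma V_in: "u \<in> words (vb_gens n) \<Longrightarrow> cV n u \<in> carrier (VB n)"
  unfolding VB_def by (rule presg.cls_in[OF vpres])
lemma V_eq: "veq n u v \<Longrightarrow> u \<in> words (vb_gens n) \<Longrightarrow> cV n u = cV n v"
  using presg.cls_eq[OF vpres] presg.pe_words[OF vpres] by metis
lemma carrier_VB: "carrier (VB n) = cV n ` words (vb_gens n)"
  unfolding VB_def by (rule presg.carrier_PG[OF vpres])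

lemma xw_words: "(k, l) \<in> x_gens n \<Longrightarrow> x_word k l \<in> words (vb_gens n)"
  by (auto simp: x_word_def x_gens_def words_def g_def)

lemma x_elem_cV: "x_elem n k l = cV n (x_word k l)" by (simp add: x_elem_def vb_elem_def)

lemma xw_succ_r: "k < l \<Longrightarrow> x_word k (Suc l) = rl l # x_word k l @ [rl l]"
  by (simp add: x_word_def)
lemma xw_succ_l: "l < k \<Longrightarrow> x_word (Suc k) l = rl k # x_word k l @ [rl k]"
  by (simp add: x_word_def)


lemma Phi_hom: "lift (SD n) (fPhi n) \<in> hom (VB n) (SD n)"
  unfolding VB_def by (rule presg.lift_hom[OF vpres group_SD fPhi_in Phi_rels])

lemma Phi_cls: "w \<in> words (vb_gens n) \<Longrightarrow> lift (SD n) (fPhi n) (cV n w) = ev (SD n) (fPhi n) w"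
  by (rule presg.lift_cls[OF vpres group_SD fPhi_in Phi_rels])

lemma ev_SD_conj:
  assumes "w \<in> words (vb_gens n)" "1 \<le> m" "m < n"
  shows "ev (SD n) (fPhi n) (rl m # w @ [rl m]) = fPhi n (Rho m) \<otimes>\<^bsub>SD n\<^esub> (ev (SD n) (fPhi n) w \<otimes>\<^bsub>SD n\<^esub> (fPhi n (Rho m) \<otimes>\<^bsub>SD n\<^esub> \<one>\<^bsub>SD n\<^esub>))"
  using group.ev_append[OF group_SD fPhi_in, where u=w and v="[rl m]"] assms by simp

lemma Phi_x_step:
  assumes e: "ev (SD n) (fPhi n) w = (cP n [((k, l), False)], id)" and w: "w \<in> words (vb_gens n)"
    and m: "1 \<le> m" "m < n" and kl: "(k, l) \<in> x_gens n"
  shows "ev (SD n) (fPhi n) (rl m # w @ [rl m]) = (cP n [((sw m k, sw m l), False)], id)"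
proof -
  have p: "sw m permutes {1..n}" by (rule sw_perm) (use m in auto)
  have wk: "[((k, l), False)] \<in> words (x_gens n)" using kl by simp
  show ?thesis using ev_SD_conj[OF w m] e
    by (simp add: SD_simps alpha_one[OF p] alpha_gen[OF p kl] P_one wk kl xg_sw[OF kl m] P_in sw_o_sw alpha_id_cls P_mult)
qed


lemma Phi_sig: "1 \<le> k \<Longrightarrow> k < n \<Longrightarrow> ev (SD n) (fPhi n) [sl k] = (cP n [((k, Suc k), False)], id)"
proof -
  assume k: "1 \<le> k" "k < n"
  have w: "[((k, Suc k), False)] \<in> words (x_gens n)" using k by (simp add: x_gens_def)
  show ?thesis using w by (simp add: SD_simps P_one alpha_id_cls P_mult)
qed

lemma Phi_x_lt: "1 \<le> k \<Longrightarrow> k < l \<Longrightarrow> l \<le> n \<Longrightarrow> ev (SD n) (fPhi n) (x_word k l) = (cP n [((k, l), False)], id)"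
proof (induction l)
  case 0 then show ?case by simp
next
  case (Suc l)
  show ?case
  proof (cases "k < l")
    case True
    have IH: "ev (SD n) (fPhi n) (x_word k l) = (cP n [((k, l), False)], id)" by (rule Suc.IH) (use Suc True in auto)
    have kl: "(k, l) \<in> x_gens n" using Suc True by (simp add: x_gens_def)
    have "ev (SD n) (fPhi n) (x_word k (Suc l)) = (cP n [((sw l k, sw l l), False)], id)"
      unfolding xw_succ_r[OF True] by (rule Phi_x_step[OF IH xw_words[OF kl] _ _ kl]) (use Suc True in auto)
    moreover have "sw l k = k" "sw l l = Suc l" using True by (auto simp: sw_def)
    ultimately show ?thesis by (simp add: id_def)
  next
    case False
    then have "l = k" using Suc by simp
    then show ?thesis using Phi_sig[of k n] Suc by (simp add: x_word_def g_def id_def)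
  qed
qed

lemma Phi_x_gt: "1 \<le> l \<Longrightarrow> l < k \<Longrightarrow> k \<le> n \<Longrightarrow> ev (SD n) (fPhi n) (x_word k l) = (cP n [((k, l), False)], id)"
proof (induction k)
  case 0 then show ?case by simp
next
  case (Suc k)
  show ?case
  proof (cases "l < k")
    case True
    have IH: "ev (SD n) (fPhi n) (x_word k l) = (cP n [((k, l), False)], id)" by (rule Suc.IH) (use Suc True in auto)
    have kl: "(k, l) \<in> x_gens n" using Suc True by (simp add: x_gens_def)
    have "ev (SD n) (fPhi n) (x_word (Suc k) l) = (cP n [((sw k k, sw k l), False)], id)"
      unfolding xw_succ_l[OF True] by (rule Phi_x_step[OF IH xw_words[OF kl] _ _ kl]) (use Suc True in auto)
    moreover have "sw k k = Suc k" "sw k l = l" using True by (auto simp: sw_def)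
    ultimately show ?thesis by (simp add: id_def)
  next
    case False
    then have lk: "k = l" using Suc by simp
    have kl: "(l, Suc l) \<in> x_gens n" using Suc lk by (simp add: x_gens_def)
    have e: "x_word (Suc l) l = rl l # [sl l] @ [rl l]" by (simp add: x_word_def g_def)
    have "ev (SD n) (fPhi n) (x_word (Suc l) l) = (cP n [((sw l l, sw l (Suc l)), False)], id)"
      unfolding e by (rule Phi_x_step[OF Phi_sig _ _ _ kl]) (use Suc lk in auto)
    moreover have "sw l l = Suc l" "sw l (Suc l) = l" by (auto simp: sw_def)
    ultimately show ?thesis using lk by (simp add: id_def)
  qed
qed

lemma Phi_x: "(k, l) \<in> x_gens n \<Longrightarrow> ev (SD n) (fPhi n) (x_word k l) = (cP n [((k, l), False)], id)"
proof -
  assume "(k, l) \<in> x_gens n"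
  then have h: "1 \<le> k" "k \<le> n" "1 \<le> l" "l \<le> n" "k \<noteq> l" by (auto simp: x_gens_def)
  show ?thesis
  proof (cases "k < l")
    case True then show ?thesis using Phi_x_lt[of k l n] h by blast
  next
    case False then show ?thesis using Phi_x_gt[of l k n] h by simp
  qed
qed

definition fpsi :: "nat \<Rightarrow> nat \<times> nat \<Rightarrow> vb_gen word set" where
  "fpsi n a = x_elem n (fst a) (snd a)"

definition Xs :: "nat \<Rightarrow> vb_gen word set set" where
  "Xs n = {x_elem n k l | k l. (k, l) \<in> x_gens n}"

lemma x_elem_in: "(k, l) \<in> x_gens n \<Longrightarrow> x_elem n k l \<in> carrier (VB n)"
  by (simp add: x_elem_cV V_in xw_words)

lemma Xs_carrier: "Xs n \<subseteq> carrier (VB n)"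
  using x_elem_in by (auto simp: Xs_def)

lemma fpsi_in: "fpsi n \<in> x_gens n \<rightarrow> carrier (VB n)"
  using x_elem_in by (auto simp: fpsi_def)

lemma psi_rels:
  assumes lr: "(l, r) \<in> x_rels n"
  shows "ev (VB n) (fpsi n) l = ev (VB n) (fpsi n) r"
  using lr unfolding x_rels_def
proof (elim UnE CollectE exE conjE)
  fix i j k l' assume e: "(l, r) = (xg i j @ xg k l', xg k l' @ xg i j)" and h: "(i, j) \<in> x_gens n" "(k, l') \<in> x_gens n" "distinct [i, j, k, l']"
  have w: "x_word i j \<in> words (vb_gens n)" "x_word k l' \<in> words (vb_gens n)" using h xw_words by auto
  have "cV n (x_word i j @ x_word k l') = cV n (x_word k l' @ x_word i j)"
    by (rule V_eq[OF rel_comm[OF h]]) (use w in simp)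
  then show ?thesis using e w by (simp add: xg_def fpsi_def x_elem_cV V_one V_mult)
next
  fix i j k assume e: "(l, r) = (xg i k @ xg k j @ xg i k, xg k j @ xg i k @ xg k j)" and h: "(i, k) \<in> x_gens n" "(k, j) \<in> x_gens n" "distinct [i, j, k]"
  have w: "x_word i k \<in> words (vb_gens n)" "x_word k j \<in> words (vb_gens n)" using h xw_words by auto
  have "cV n (x_word i k @ x_word k j @ x_word i k) = cV n (x_word k j @ x_word i k @ x_word k j)"
    by (rule V_eq[OF rel_braid[OF h]]) (use w in simp)
  then show ?thesis using e w by (simp add: xg_def fpsi_def x_elem_cV V_one V_mult)
qed

lemma psi_hom: "lift (VB n) (fpsi n) \<in> hom (P n) (VB n)"
  unfolding P_def by (rule presg.lift_hom[OF xpres group_VB fpsi_in psi_rels])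

lemma psi_cls: "w \<in> words (x_gens n) \<Longrightarrow> lift (VB n) (fpsi n) (cP n w) = ev (VB n) (fpsi n) w"
  by (rule presg.lift_cls[OF xpres group_VB fpsi_in psi_rels])

lemma psi_gen: "a \<in> x_gens n \<Longrightarrow> lift (VB n) (fpsi n) (gen_elem (x_gens n) (x_rels n) a) = fpsi n a"
  by (rule presg.lift_gen[OF xpres group_VB fpsi_in psi_rels])

lemma Phi_psi:
  assumes p: "p \<in> carrier (P n)"
  shows "lift (SD n) (fPhi n) (lift (VB n) (fpsi n) p) = (p, id)"
proof -
  have h1: "(\<lambda>p. lift (SD n) (fPhi n) (lift (VB n) (fpsi n) p)) \<in> hom (P n) (SD n)"
  proof (rule homI)
    fix x assume "x \<in> carrier (P n)"
    then show "lift (SD n) (fPhi n) (lift (VB n) (fpsi n) x) \<in> carrier (SD n)"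
      by (intro hom_in_carrier[OF Phi_hom] hom_in_carrier[OF psi_hom])
  next
    fix x y assume xy: "x \<in> carrier (P n)" "y \<in> carrier (P n)"
    then show "lift (SD n) (fPhi n) (lift (VB n) (fpsi n) (x \<otimes>\<^bsub>P n\<^esub> y)) =
      lift (SD n) (fPhi n) (lift (VB n) (fpsi n) x) \<otimes>\<^bsub>SD n\<^esub> lift (SD n) (fPhi n) (lift (VB n) (fpsi n) y)"
      by (simp add: hom_mult[OF psi_hom] hom_mult[OF Phi_hom] hom_in_carrier[OF psi_hom])
  qed
  have h2: "(\<lambda>p. (p, id)) \<in> hom (P n) (SD n)"
  proof (rule homI)
    fix x assume "x \<in> carrier (P n)" then show "(x, id) \<in> carrier (SD n)" by (simp add: SD_simps)
  next
    fix x y assume "x \<in> carrier (P n)" "y \<in> carrier (P n)"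
    then show "(x \<otimes>\<^bsub>P n\<^esub> y, id) = (x, id) \<otimes>\<^bsub>SD n\<^esub> (y, id)" by (simp add: SD_simps alpha_id)
  qed
  show ?thesis
  proof (rule presg.hom_unique[OF xpres group_SD h1[unfolded P_def] h2[unfolded P_def], simplified, OF _ p[unfolded P_def]])
    fix a assume a: "a \<in> x_gens n"
    obtain k l where kl: "a = (k, l)" by force
    have "lift (SD n) (fPhi n) (lift (VB n) (fpsi n) (gen_elem (x_gens n) (x_rels n) a))
        = lift (SD n) (fPhi n) (cV n (x_word k l))" using a kl by (simp add: psi_gen fpsi_def x_elem_cV)
    also have "\<dots> = (cP n [((k, l), False)], id)" using a kl by (simp add: Phi_cls xw_words Phi_x)
    also have "\<dots> = (gen_elem (x_gens n) (x_rels n) a, id)" using kl by (simp add: gen_elem_def)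
    finally show "lift (SD n) (fPhi n) (lift (VB n) (fpsi n) (gen_elem (x_gens n) (x_rels n) a)) =
          (gen_elem (x_gens n) (x_rels n) a, id)" .
  qed
qed

lemma gen_V: "gen_elem (vb_gens n) (vb_rels n) a = cV n [(a, False)]" by (simp add: gen_elem_def)

lemma Xs_mem: "(k, l) \<in> x_gens n \<Longrightarrow> x_elem n k l \<in> Xs n" by (auto simp: Xs_def)

lemma R_in: "1 \<le> m \<Longrightarrow> m < n \<Longrightarrow> cV n [rl m] \<in> carrier (VB n)" by (simp add: V_in)

lemma RR: "1 \<le> m \<Longrightarrow> m < n \<Longrightarrow> cV n [rl m] \<otimes>\<^bsub>VB n\<^esub> cV n [rl m] = \<one>\<^bsub>VB n\<^esub>"
proof -
  assume m: "1 \<le> m" "m < n"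
  have "cV n [rl m, rl m] = cV n []" by (rule V_eq[OF R_rr[OF m]]) (use m in simp)
  then show ?thesis using m by (simp add: V_mult V_one)
qed

lemma Rinv: "1 \<le> m \<Longrightarrow> m < n \<Longrightarrow> inv\<^bsub>VB n\<^esub> (cV n [rl m]) = cV n [rl m]"
  by (rule group.inv_equality[OF group_VB RR R_in R_in])

lemma conj_lit: "w \<in> words (vb_gens n) \<Longrightarrow> 1 \<le> m \<Longrightarrow> m < n \<Longrightarrow>
   cV n (rl m # w @ [rl m]) = cV n [rl m] \<otimes>\<^bsub>VB n\<^esub> cV n w \<otimes>\<^bsub>VB n\<^esub> cV n [rl m]"
  by (simp add: V_mult)

lemma R_conj: "(k, l) \<in> x_gens n \<Longrightarrow> 1 \<le> m \<Longrightarrow> m < n \<Longrightarrow>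
  cV n [rl m] \<otimes>\<^bsub>VB n\<^esub> x_elem n k l \<otimes>\<^bsub>VB n\<^esub> cV n [rl m] = x_elem n (sw m k) (sw m l)"
proof -
  assume kl: "(k, l) \<in> x_gens n" and m: "1 \<le> m" "m < n"
  have w: "x_word k l \<in> words (vb_gens n)" by (rule xw_words[OF kl])
  have "cV n (rl m # x_word k l @ [rl m]) = cV n (x_word (sw m k) (sw m l))"
    by (rule V_eq[OF conj_x[OF kl m]]) (use w m in simp)
  then show ?thesis using conj_lit[OF w m] by (simp add: x_elem_cV)
qed

lemma K_normal: "generate (VB n) (Xs n) \<lhd> VB n"
proof -
  interpret V: group "VB n" by (rule group_VB)
  let ?K = "generate (VB n) (Xs n)"
  let ?gen = "gen_elem (vb_gens n) (vb_rels n)"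
  have sub: "subgroup ?K (VB n)" by (rule V.generate_is_subgroup[OF Xs_carrier])
  have KC: "?K \<subseteq> carrier (VB n)" by (rule V.generate_incl[OF Xs_carrier])
  have Rc: "cV n [rl m] \<otimes>\<^bsub>VB n\<^esub> h \<otimes>\<^bsub>VB n\<^esub> cV n [rl m] \<in> ?K" if m: "1 \<le> m" "m < n" and h: "h \<in> ?K" for m h
  proof -
    have Rin: "cV n [rl m] \<in> carrier (VB n)" by (rule R_in[OF m])
    have RR': "cV n [rl m] \<otimes>\<^bsub>VB n\<^esub> cV n [rl m] = \<one>\<^bsub>VB n\<^esub>" by (rule RR[OF m])
    have Ri: "inv\<^bsub>VB n\<^esub> (cV n [rl m]) = cV n [rl m]" by (rule Rinv[OF m])
    have X: "cV n [rl m] \<otimes>\<^bsub>VB n\<^esub> x \<otimes>\<^bsub>VB n\<^esub> cV n [rl m] \<in> Xs n" if x: "x \<in> Xs n" for x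
    proof -
      obtain k l where kl: "x = x_elem n k l" "(k, l) \<in> x_gens n" using x by (auto simp: Xs_def)
      show ?thesis using R_conj[OF kl(2) m] xg_sw[OF kl(2) m] kl by (auto simp: Xs_def)
    qed
    from h show ?thesis
    proof (induction rule: generate.induct)
      case one then show ?case using Rin RR' by (simp add: generate.one)
    next
      case (incl x) then show ?case using X by (simp add: generate.incl)
    next
      case (inv x)
      have xc: "x \<in> carrier (VB n)" using inv Xs_carrier by auto
      have "inv\<^bsub>VB n\<^esub> (cV n [rl m] \<otimes>\<^bsub>VB n\<^esub> x \<otimes>\<^bsub>VB n\<^esub> cV n [rl m]) = cV n [rl m] \<otimes>\<^bsub>VB n\<^esub> inv\<^bsub>VB n\<^esub> x \<otimes>\<^bsub>VB n\<^esub> cV n [rl m]"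
        using xc Rin Ri by (simp add: V.inv_mult_group V.m_assoc)
      then show ?case using generate.inv[OF X[OF inv], where G="VB n"] by simp
    next
      case (eng h1 h2)
      have c: "h1 \<in> carrier (VB n)" "h2 \<in> carrier (VB n)" using eng KC by auto
      have "cV n [rl m] \<otimes>\<^bsub>VB n\<^esub> (h1 \<otimes>\<^bsub>VB n\<^esub> h2) \<otimes>\<^bsub>VB n\<^esub> cV n [rl m]
          = (cV n [rl m] \<otimes>\<^bsub>VB n\<^esub> h1 \<otimes>\<^bsub>VB n\<^esub> cV n [rl m]) \<otimes>\<^bsub>VB n\<^esub> (cV n [rl m] \<otimes>\<^bsub>VB n\<^esub> h2 \<otimes>\<^bsub>VB n\<^esub> cV n [rl m])"
        using c Rin RR' by (simp add: V.m_assoc[symmetric]) (simp add: V.m_assoc)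
      then show ?case using generate.eng[OF eng.IH] by simp
    qed
  qed
  have gc: "?gen a \<otimes>\<^bsub>VB n\<^esub> h \<otimes>\<^bsub>VB n\<^esub> inv\<^bsub>VB n\<^esub> (?gen a) \<in> ?K \<and>
            inv\<^bsub>VB n\<^esub> (?gen a) \<otimes>\<^bsub>VB n\<^esub> h \<otimes>\<^bsub>VB n\<^esub> inv\<^bsub>VB n\<^esub> (inv\<^bsub>VB n\<^esub> (?gen a)) \<in> ?K"
    if a: "a \<in> vb_gens n" and h: "h \<in> ?K" for a h
  proof (cases a)
    case (Sig i)
    have i: "1 \<le> i" "i < n" using a Sig by auto
    have "?gen a = x_elem n i (Suc i)" using Sig by (simp add: gen_V x_elem_cV x_word_def g_def)
    moreover have "x_elem n i (Suc i) \<in> Xs n" using i by (intro Xs_mem) (simp add: x_gens_def)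
    ultimately have gK: "?gen a \<in> ?K" by (simp add: generate.incl)
    have iK: "inv\<^bsub>VB n\<^esub> (?gen a) \<in> ?K" by (rule subgroup.m_inv_closed[OF sub gK])
    have iiK: "inv\<^bsub>VB n\<^esub> (inv\<^bsub>VB n\<^esub> (?gen a)) \<in> ?K" by (rule subgroup.m_inv_closed[OF sub iK])
    show ?thesis using gK iK iiK h by (simp add: subgroup.m_closed[OF sub])
  next
    case (Rho m)
    have m: "1 \<le> m" "m < n" using a Rho by auto
    have g: "?gen a = cV n [rl m]" using Rho by (simp add: gen_V)
    show ?thesis using Rc[OF m h] by (simp add: g Rinv[OF m])
  qed
  have main: "\<forall>h\<in>?K. ev (VB n) ?gen w \<otimes>\<^bsub>VB n\<^esub> h \<otimes>\<^bsub>VB n\<^esub> inv\<^bsub>VB n\<^esub> (ev (VB n) ?gen w) \<in> ?K"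
    if w: "w \<in> words (vb_gens n)" for w
    using w
  proof (induction w)
    case Nil then show ?case using KC by auto
  next
    case (Cons x w)
    obtain a b where x: "x = (a, b)" by force
    have a: "a \<in> vb_gens n" and w: "w \<in> words (vb_gens n)" using Cons x by auto
    have gcar: "?gen a \<in> carrier (VB n)" using a by (simp add: gen_V V_in)
    have fc: "?gen \<in> vb_gens n \<rightarrow> carrier (VB n)" by (auto simp: gen_V V_in)
    have ec: "ev (VB n) ?gen w \<in> carrier (VB n)" by (rule V.ev_closed[OF fc w])
    define y where "y = (if b then inv\<^bsub>VB n\<^esub> (?gen a) else ?gen a)"
    have yc: "y \<in> carrier (VB n)" using gcar by (simp add: y_def)
    have yK: "y \<otimes>\<^bsub>VB n\<^esub> h' \<otimes>\<^bsub>VB n\<^esub> inv\<^bsub>VB n\<^esub> y \<in> ?K" if "h' \<in> ?K" for h'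
      using gc[OF a that] by (simp add: y_def)
    show ?case
    proof
      fix h assume h: "h \<in> ?K"
      have hc: "h \<in> carrier (VB n)" using h KC by auto
      have e: "ev (VB n) ?gen (x # w) = y \<otimes>\<^bsub>VB n\<^esub> ev (VB n) ?gen w" by (simp add: x y_def)
      have "ev (VB n) ?gen (x # w) \<otimes>\<^bsub>VB n\<^esub> h \<otimes>\<^bsub>VB n\<^esub> inv\<^bsub>VB n\<^esub> (ev (VB n) ?gen (x # w))
          = y \<otimes>\<^bsub>VB n\<^esub> (ev (VB n) ?gen w \<otimes>\<^bsub>VB n\<^esub> h \<otimes>\<^bsub>VB n\<^esub> inv\<^bsub>VB n\<^esub> (ev (VB n) ?gen w)) \<otimes>\<^bsub>VB n\<^esub> inv\<^bsub>VB n\<^esub> y"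
        unfolding e using yc ec hc by (simp add: V.inv_mult_group V.m_assoc)
      then show "ev (VB n) ?gen (x # w) \<otimes>\<^bsub>VB n\<^esub> h \<otimes>\<^bsub>VB n\<^esub> inv\<^bsub>VB n\<^esub> (ev (VB n) ?gen (x # w)) \<in> ?K"
        using yK Cons.IH[OF w] h by simp
    qed
  qed
  show ?thesis
  proof (rule V.normal_invI[OF sub])
    fix x h assume x: "x \<in> carrier (VB n)" and h: "h \<in> ?K"
    obtain w where w: "w \<in> words (vb_gens n)" "x = cV n w" using x by (auto simp: carrier_VB)
    have "x = ev (VB n) ?gen w" using w presg.cls_ev[OF vpres, folded VB_def] by simp
    then show "x \<otimes>\<^bsub>VB n\<^esub> h \<otimes>\<^bsub>VB n\<^esub> inv\<^bsub>VB n\<^esub> x \<in> ?K" using main[OF w(1)] h by simp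
  qed
qed

abbreviation Sigs :: "nat \<Rightarrow> vb_gen word set set" where
  "Sigs n \<equiv> {vb_elem n (g (Sig i)) | i. 1 \<le> i \<and> i \<le> n - 1}"

lemma x_in_normal:
  assumes N: "N \<lhd> VB n" and S: "Sigs n \<subseteq> N" and kl: "(k, l) \<in> x_gens n"
  shows "x_elem n k l \<in> N"
proof -
  have cN: "cV n [rl m] \<otimes>\<^bsub>VB n\<^esub> h \<otimes>\<^bsub>VB n\<^esub> cV n [rl m] \<in> N" if m: "1 \<le> m" "m < n" and h: "h \<in> N" for m h
    using normal.inv_op_closed2[OF N R_in[OF m] h] by (simp add: Rinv[OF m])
  have sig: "cV n [sl i] \<in> N" if "1 \<le> i" "i < n" for i
    using S that by (force simp: vb_elem_def g_def)
  have lt: "x_elem n k l \<in> N" if "1 \<le> k" "k < l" "l \<le> n" for k l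
    using that
  proof (induction l)
    case 0 then show ?case by simp
  next
    case (Suc l)
    show ?case
    proof (cases "k < l")
      case True
      have kl: "(k, l) \<in> x_gens n" using Suc True by (simp add: x_gens_def)
      have "x_elem n k (Suc l) = cV n [rl l] \<otimes>\<^bsub>VB n\<^esub> x_elem n k l \<otimes>\<^bsub>VB n\<^esub> cV n [rl l]"
        using conj_lit[OF xw_words[OF kl], of l] Suc True by (simp add: x_elem_cV xw_succ_r[OF True])
      then show ?thesis using cN[of l "x_elem n k l"] Suc True by simp
    next
      case False
      then have "l = k" using Suc by simp
      then show ?thesis using sig[of k] Suc by (simp add: x_elem_cV x_word_def g_def)
    qed
  qed
  have gt: "x_elem n k l \<in> N" if "1 \<le> l" "l < k" "k \<le> n" for k l
    using that
  proof (induction k)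
    case 0 then show ?case by simp
  next
    case (Suc k)
    show ?case
    proof (cases "l < k")
      case True
      have kl: "(k, l) \<in> x_gens n" using Suc True by (simp add: x_gens_def)
      have "x_elem n (Suc k) l = cV n [rl k] \<otimes>\<^bsub>VB n\<^esub> x_elem n k l \<otimes>\<^bsub>VB n\<^esub> cV n [rl k]"
        using conj_lit[OF xw_words[OF kl], of k] Suc True by (simp add: x_elem_cV xw_succ_l[OF True])
      then show ?thesis using cN[of k "x_elem n k l"] Suc True by simp
    next
      case False
      then have lk: "k = l" using Suc by simp
      have w: "[sl l] \<in> words (vb_gens n)" using Suc lk by simp
      have "x_elem n (Suc l) l = cV n [rl l] \<otimes>\<^bsub>VB n\<^esub> cV n [sl l] \<otimes>\<^bsub>VB n\<^esub> cV n [rl l]"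
        using conj_lit[OF w, of l] Suc lk by (simp add: x_elem_cV x_word_def g_def)
      then show ?thesis using cN[of l "cV n [sl l]"] sig[of l] Suc lk by simp
    qed
  qed
  show ?thesis using kl lt gt by (cases "k < l") (auto simp: x_gens_def)
qed

lemma H_eq: "H n = generate (VB n) (Xs n)"
proof
  interpret V: group "VB n" by (rule group_VB)
  have SK: "Sigs n \<subseteq> generate (VB n) (Xs n)"
  proof
    fix x assume "x \<in> Sigs n"
    then obtain i where i: "x = vb_elem n (g (Sig i))" "1 \<le> i" "i \<le> n - 1" by auto
    have "x = x_elem n i (Suc i)" using i by (simp add: x_elem_def x_word_def)
    moreover have "(i, Suc i) \<in> x_gens n" using i by (auto simp: x_gens_def)
    ultimately show "x \<in> generate (VB n) (Xs n)" by (simp add: Xs_mem generate.incl)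
  qed
  show "H n \<subseteq> generate (VB n) (Xs n)"
    unfolding H_def normal_closure_def using K_normal SK by blast
  let ?A = "{N. N \<lhd> VB n \<and> Sigs n \<subseteq> N}"
  have cA: "carrier (VB n) \<in> ?A"
  proof
    have "carrier (VB n) \<lhd> VB n"
      by (rule V.normal_invI[OF V.subgroup_self]) auto
    moreover have "Sigs n \<subseteq> carrier (VB n)" by (auto simp: vb_elem_def g_def V_in)
    ultimately show "carrier (VB n) \<lhd> VB n \<and> Sigs n \<subseteq> carrier (VB n)" by simp
  qed
  have sub: "subgroup (H n) (VB n)"
    unfolding H_def normal_closure_def by (rule V.subgroups_Inter) (use cA normal_imp_subgroup in auto)
  have "Xs n \<subseteq> H n"
    unfolding H_def normal_closure_def Xs_def using x_in_normal by blast
  then show "generate (VB n) (Xs n) \<subseteq> H n" by (rule V.generate_subgroup_incl[OF _ sub])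
qed

abbreviation psi :: "nat \<Rightarrow> (nat \<times> nat) word set \<Rightarrow> vb_gen word set" where
  "psi n \<equiv> lift (VB n) (fpsi n)"

lemma psi_image: "psi n ` carrier (P n) = generate (VB n) (Xs n)"
proof
  interpret V: group "VB n" by (rule group_VB)
  show "psi n ` carrier (P n) \<subseteq> generate (VB n) (Xs n)"
  proof
    fix y assume "y \<in> psi n ` carrier (P n)"
    then obtain w where w: "w \<in> words (x_gens n)" "y = psi n (cP n w)" by (auto simp: carrier_P)
    have "ev (VB n) (fpsi n) w \<in> generate (VB n) (Xs n)" using w(1)
    proof (induction w)
      case Nil then show ?case by (simp add: generate.one)
    next
      case (Cons ab w)
      have i: "fpsi n (fst ab) \<in> Xs n" using Cons by (cases "fst ab") (simp add: fpsi_def Xs_mem)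
      show ?case
      proof (cases "snd ab")
        case True then show ?thesis using Cons generate.eng[OF generate.inv[OF i], where G="VB n"] by simp
      next
        case False then show ?thesis using Cons generate.eng[OF generate.incl[OF i], where G="VB n"] by simp
      qed
    qed
    then show "y \<in> generate (VB n) (Xs n)" using w psi_cls by simp
  qed
  have gh: "group_hom (P n) (VB n) (psi n)"
    by (rule group_hom.intro[OF group_P group_VB], unfold_locales, rule psi_hom)
  have "Xs n \<subseteq> psi n ` carrier (P n)"
  proof
    fix x assume "x \<in> Xs n"
    then obtain k l where kl: "x = x_elem n k l" "(k, l) \<in> x_gens n" by (auto simp: Xs_def)
    have "gen_elem (x_gens n) (x_rels n) (k, l) \<in> carrier (P n)"
      using kl by (simp add: gen_elem_def P_in)
    moreover have "psi n (gen_elem (x_gens n) (x_rels n) (k, l)) = x" using kl psi_gen by (simp add: fpsi_def)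
    ultimately show "x \<in> psi n ` carrier (P n)" by force
  qed
  then show "generate (VB n) (Xs n) \<subseteq> psi n ` carrier (P n)"
    by (rule V.generate_subgroup_incl[OF _ group_hom.img_is_subgroup[OF gh]])
qed

lemma psi_inj: "inj_on (psi n) (carrier (P n))"
proof
  fix x y assume xy: "x \<in> carrier (P n)" "y \<in> carrier (P n)" "psi n x = psi n y"
  have "(x, id) = lift (SD n) (fPhi n) (psi n x)" by (rule Phi_psi[OF xy(1), symmetric])
  also have "\<dots> = lift (SD n) (fPhi n) (psi n y)" using xy(3) by simp
  also have "\<dots> = (y, id)" by (rule Phi_psi[OF xy(2)])
  finally show "x = y" by simp
qed

theorem proposition6p2:
  fixes n :: nat
  assumes "2 \<le> n"
  shows "H n = generate (VB n) {x_elem n k l | k l. (k, l) \<in> x_gens n}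
    \<and> (\<exists>\<phi>. \<phi> \<in> iso (P n) ((VB n)\<lparr>carrier := H n\<rparr>)
          \<and> (\<forall>(k, l) \<in> x_gens n. \<phi> (gen_elem (x_gens n) (x_rels n) (k, l)) = x_elem n k l))"
proof -
  have HK: "H n = generate (VB n) (Xs n)" by (rule H_eq)
  have img: "psi n ` carrier (P n) = H n" using HK psi_image by simp
  have hom: "psi n \<in> hom (P n) ((VB n)\<lparr>carrier := H n\<rparr>)"
  proof (rule homI)
    fix x assume "x \<in> carrier (P n)" then show "psi n x \<in> carrier ((VB n)\<lparr>carrier := H n\<rparr>)"
      using img by auto
  next
    fix x y assume "x \<in> carrier (P n)" "y \<in> carrier (P n)"
    then show "psi n (x \<otimes>\<^bsub>P n\<^esub> y) = psi n x \<otimes>\<^bsub>(VB n)\<lparr>carrier := H n\<rparr>\<^esub> psi n y"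
      by (simp add: hom_mult[OF psi_hom])
  qed
  have iso: "psi n \<in> iso (P n) ((VB n)\<lparr>carrier := H n\<rparr>)"
    unfolding iso_def using hom psi_inj img by (simp add: bij_betw_def)
  have gens0: "\<forall>a \<in> x_gens n. psi n (gen_elem (x_gens n) (x_rels n) a) = x_elem n (fst a) (snd a)"
    using psi_gen by (simp add: fpsi_def)
  have gens: "\<forall>(k, l) \<in> x_gens n. psi n (gen_elem (x_gens n) (x_rels n) (k, l)) = x_elem n k l"
    using gens0 by auto
  show ?thesis using HK iso gens unfolding Xs_def by blast
qed

end
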